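(* Let $\mathcal{S}$ be a nonempty semigroup such that $|\mathcal{S}\setminus E(\mathcal{S})|$ is finite, and let $T$ be an $\mathcal{S}$-valued sequence of length $|\mathcal{S}\setminus E(\mathcal{S})|$. Then $\prod(T)\cap E(\mathcal{S})=\emptyset$ if and only if $\mathcal{R}=\langle \mathrm{supp}(T)\rangle$ is a finite commutative semigroup with $\mathcal{S}\setminus\mathcal{R}\subseteq E(\mathcal{S})$, the universal semilattice $Y(\mathcal{R})$ is a chain, $x_1*x_2=x_1$ for all $x_1,x_2\in\mathcal{R}$ with $x_1\lneqq_{\mathcal{N}_{\mathcal{R}}} x_2$, and moreover: (i) each archimedean component of $\mathcal{R}$ is either a finite cyclic semigroup $\langle x\rangle$ with $x\in\mathrm{supp}(T)$ and $\mathcal{I}(x)\equiv 1\pmod{\mathcal{P}(x)}$, or an ideal extension of a nontrivial finite cyclic group $\langle x_2\rangle$ by a nontrivial finite cyclic nilsemigroup $\langle x_1\rangle$ with $x_1,x_2\in\mathrm{supp}(T)$ and with the partial homomorphism $\varphi^{\langle x_1\rangle}_{\langle x_2\rangle}$ trivial, i.e. $\varphi^{\langle x_1\rangle}_{\langle x_2\rangle}(x_1)=x_1*e_{\langle x_2\rangle}=e_{\langle x_2\rangle}$, where $e_{\langle x_2\rangle}$ is the identity element of the group $\langle x_2\rangle$; (ii) $\mathrm{v}_x(T)=\mathcal{I}(x)+\mathcal{P}(x)-2$ for each $x\in\mathrm{supp}(T)$.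
   Context: $(\mathcal{S},* )$ is a semigroup, $E(\mathcal{S})=\{e\in\mathcal{S}: e*e=e\}$. For a finite sequence $T$ of elements of $\mathcal{S}$: $\prod(T)$ is the set of all products of the terms of nonempty subsequences of $T$ taken in every possible order; $\mathrm{supp}(T)$ is the set of elements occurring in $T$; $\mathrm{v}_x(T)$ is the number of times $x$ occurs in $T$. $\langle X\rangle$ is the subsemigroup generated by $X$. For $x$ with $\langle x\rangle$ finite, the index $\mathcal{I}(x)$ is the least $r>0$ with $x^r=x^t$ for some positive $t\neq r$, and the period $\mathcal{P}(x)$ is the least $k>0$ with $x^{\mathcal{I}(x)+k}=x^{\mathcal{I}(x)}$. For a commutative semigroup $\mathcal{R}$: $a\leqq_{\mathcal{N}_{\mathcal{R}}} b$ means $a^m=b*c$ for some $c\in\mathcal{R}$ and integer $m>0$; $a\,\mathcal{N}_{\mathcal{R}}\,b$ means $a\leqq b$ and $b\leqq a$; $a\lneqq_{\mathcal{N}_{\mathcal{R}}} b$ means $a\leqq b$ but not $b\leqq a$. $\mathcal{N}_{\mathcal{R}}$ is a congruence, the quotient $Y(\mathcal{R})=\mathcal{R}/\mathcal{N}_{\mathcal{R}}$ is a semilattice (the universal semilattice), and its classes are the archimedean components of $\mathcal{R}$. A nilsemigroup is a semigroup with zero $0$ in which every element has some power equal to $0$. If $G$ is an ideal of a semigroup $B$ and $Q$ is the Rees quotient $B/G$ (collapsing $G$ to a zero), $B$ is called an ideal extension of $G$ by $Q$; when $B$ is a finite commutative archimedean semigroup that is an ideal extension of a group $G$ by a nilsemigroup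 $N$, the associated partial homomorphism $\varphi^N_G: N\setminus\{0_N\}=B\setminus G\to G$ is $a\mapsto a*e_G$, with $e_G$ the identity of $G$. *)

theory Defs
  imports Main
begin

(* The semigroup S is the whole type 'a of class semigroup_mult (operation * ). *)

definition Idem :: "'a::semigroup_mult set" where
  "Idem = {e. e * e = e}"

(* product of a nonempty list (semigroups have no unit) *)
fun sprod :: "'a::semigroup_mult list \<Rightarrow> 'a" where
  "sprod [] = undefined"
| "sprod [x] = x"
| "sprod (x # y # xs) = x * sprod (y # xs)"

(* positive powers x^n, n \<ge> 1 *)
definition pw :: "'a::semigroup_mult \<Rightarrow> nat \<Rightarrow> 'a" where
  "pw x n = sprod (replicate n x)"

(* \<Pi>(T): products of the terms of nonempty subsequences of T, taken in every order *)
definition Prods :: "'a::semigroup_mult list \<Rightarrow> 'a set" where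
  "Prods T = {sprod (map (\<lambda>i. T ! i) is) | is.
                 is \<noteq> [] \<and> distinct is \<and> set is \<subseteq> {..<length T}}"

inductive_set gen :: "'a::semigroup_mult set \<Rightarrow> 'a set" for X where
  gen_base: "x \<in> X \<Longrightarrow> x \<in> gen X"
| gen_mult: "a \<in> gen X \<Longrightarrow> b \<in> gen X \<Longrightarrow> a * b \<in> gen X"

definition idx :: "'a::semigroup_mult \<Rightarrow> nat" where
  "idx x = (LEAST r. r > 0 \<and> (\<exists>t>0. t \<noteq> r \<and> pw x r = pw x t))"

definition per :: "'a::semigroup_mult \<Rightarrow> nat" where
  "per x = (LEAST k. k > 0 \<and> pw x (idx x + k) = pw x (idx x))"

definition Nle :: "'a::semigroup_mult set \<Rightarrow> 'a \<Rightarrow> 'a \<Rightarrow> bool" where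
  "Nle R a b \<longleftrightarrow> (\<exists>c\<in>R. \<exists>m>0. pw a m = b * c)"

definition Neq :: "'a::semigroup_mult set \<Rightarrow> 'a \<Rightarrow> 'a \<Rightarrow> bool" where
  "Neq R a b \<longleftrightarrow> Nle R a b \<and> Nle R b a"

definition Nless :: "'a::semigroup_mult set \<Rightarrow> 'a \<Rightarrow> 'a \<Rightarrow> bool" where
  "Nless R a b \<longleftrightarrow> Nle R a b \<and> \<not> Nle R b a"

definition arch_comps :: "'a::semigroup_mult set \<Rightarrow> 'a set set" where
  "arch_comps R = {{b \<in> R. Neq R a b} | a. a \<in> R}"

(* the universal semilattice Y(R) = R/N_R is a chain: its (natural) order,
   induced by \<le>_N, is total *)
definition Y_chain :: "'a::semigroup_mult set \<Rightarrow> bool" where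
  "Y_chain R \<longleftrightarrow> (\<forall>a\<in>R. \<forall>b\<in>R. Nle R a b \<or> Nle R b a)"

definition group_with_id :: "'a::semigroup_mult set \<Rightarrow> 'a \<Rightarrow> bool" where
  "group_with_id G e \<longleftrightarrow> e \<in> G \<and> (\<forall>a\<in>G. \<forall>b\<in>G. a * b \<in> G)
     \<and> (\<forall>g\<in>G. e * g = g \<and> g * e = g)
     \<and> (\<forall>g\<in>G. \<exists>h\<in>G. g * h = e \<and> h * g = e)"

(* B is an ideal extension of the nontrivial finite cyclic group <x2> (identity e)
   by the nontrivial finite cyclic nilsemigroup B/<x2>, generated by the class of x1 *)
definition ideal_ext_cyclic :: "'a::semigroup_mult set \<Rightarrow> 'a \<Rightarrow> 'a \<Rightarrow> 'a \<Rightarrow> bool" where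
  "ideal_ext_cyclic B x1 x2 e \<longleftrightarrow>
     (let G = gen {x2} in
        finite B \<and> (\<forall>a\<in>B. \<forall>b\<in>B. a * b \<in> B)
      \<and> G \<subseteq> B \<and> (\<forall>b\<in>B. \<forall>g\<in>G. b * g \<in> G \<and> g * b \<in> G)
      \<and> group_with_id G e \<and> card G \<ge> 2
      \<and> x1 \<in> B - G \<and> B - G \<subseteq> gen {x1}
      \<and> (\<forall>b\<in>B. \<exists>n>0. pw b n \<in> G))"

end

theory Submission
  imports Defs "HOL-Combinatorics.List_Permutation"
begin


lemma sprod_Cons: "xs \<noteq> [] \<Longrightarrow> sprod (x # xs) = x * sprod xs"
  by (cases xs) auto

lemma sprod_append: "xs \<noteq> [] \<Longrightarrow> ys \<noteq> [] \<Longrightarrow> sprod (xs @ ys) = sprod xs * sprod ys"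
proof (induction xs)
  case Nil then show ?case by simp
next
  case (Cons x xs)
  show ?case
  proof (cases "xs = []")
    case True then show ?thesis using Cons by (simp add: sprod_Cons)
  next
    case False then show ?thesis using Cons by (simp add: sprod_Cons mult.assoc)
  qed
qed

lemma pw_1[simp]: "pw x (Suc 0) = x" by (simp add: pw_def)

lemma pw_add: "a > 0 \<Longrightarrow> b > 0 \<Longrightarrow> pw x (a + b) = pw x a * pw x b"
  unfolding pw_def by (simp add: replicate_add sprod_append)

lemma pw_Suc: "k > 0 \<Longrightarrow> pw x (Suc k) = x * pw x k"
  using pw_add[of 1 k x] by simp

lemma pw_Suc': "k > 0 \<Longrightarrow> pw x (Suc k) = pw x k * x"
  using pw_add[of k 1 x] by simp

lemma pw_mult: assumes "a > 0" "b > 0" shows "pw (pw x a) b = pw x (a * b)"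
  using assms(2)
proof (induction b rule: nat_induct_non_zero)
  case 1 then show ?case by simp
next
  case (Suc n)
  then show ?case using assms by (simp add: pw_Suc pw_add[symmetric] add.commute)
qed

lemma pw_comm1: assumes "x * y = y * x" "a > 0" shows "pw x a * y = y * pw x a"
  using assms(2)
proof (induction a rule: nat_induct_non_zero)
  case 1 then show ?case using assms by simp
next
  case (Suc n)
  have "pw x (Suc n) * y = x * (pw x n * y)" using Suc by (simp add: pw_Suc mult.assoc)
  also have "\<dots> = (x * y) * pw x n" using Suc by (simp add: mult.assoc)
  also have "\<dots> = y * pw x (Suc n)" using Suc assms by (simp add: pw_Suc mult.assoc)
  finally show ?case .
qed

lemma pw_comm: assumes "x * y = y * x" "a > 0" "b > 0" shows "pw x a * pw y b = pw y b * pw x a"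
  using assms(3)
proof (induction b rule: nat_induct_non_zero)
  case 1 then show ?case using assms pw_comm1 by simp
next
  case (Suc n)
  have "pw x a * pw y (Suc n) = (pw x a * y) * pw y n" using Suc by (simp add: pw_Suc mult.assoc)
  also have "\<dots> = y * (pw x a * pw y n)" using pw_comm1[OF assms(1,2)] by (simp add: mult.assoc)
  also have "\<dots> = pw y (Suc n) * pw x a" using Suc by (simp add: pw_Suc mult.assoc)
  finally show ?case .
qed

lemma pw_distrib: assumes "x * y = y * x" "k > 0" shows "pw (x * y) k = pw x k * pw y k"
  using assms(2)
proof (induction k rule: nat_induct_non_zero)
  case 1 then show ?case by simp
next
  case (Suc n)
  have "pw (x*y) (Suc n) = x * y * (pw x n * pw y n)" using Suc by (simp add: pw_Suc)
  also have "\<dots> = x * (y * pw x n) * pw y n" by (simp add: mult.assoc)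
  also have "\<dots> = x * (pw x n * y) * pw y n" using pw_comm1[OF assms(1) Suc(1)] by simp
  also have "\<dots> = pw x (Suc n) * pw y (Suc n)" using Suc by (simp add: pw_Suc mult.assoc)
  finally show ?case .
qed

lemma absorb1: assumes "x * y = x" "b > 0" shows "x * pw y b = x"
  using assms(2)
proof (induction b rule: nat_induct_non_zero)
  case 1 then show ?case using assms by simp
next
  case (Suc n) then show ?case using assms by (simp add: pw_Suc' mult.assoc[symmetric])
qed

lemma absorb: assumes "x * y = x" "a > 0" "b > 0" shows "pw x a * pw y b = pw x a"
proof (cases "a = 1")
  case True then show ?thesis using absorb1[OF assms(1,3)] by simp
next
  case False
  then obtain a' where a': "a = Suc a'" "a' > 0" using assms by (cases a) auto
  then show ?thesis using absorb1[OF assms(1,3)] by (simp add: pw_Suc' mult.assoc)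
qed

lemma gen_single: "gen {x} = {pw x k | k. k > 0}"
proof
  show "gen {x} \<subseteq> {pw x k | k. k > 0}"
  proof
    fix y assume "y \<in> gen {x}"
    then show "y \<in> {pw x k | k. k > 0}"
    proof (induction rule: gen.induct)
      case (gen_base y) then show ?case by (auto intro: exI[of _ 1])
    next
      case (gen_mult a b)
      then obtain i j where "a = pw x i" "b = pw x j" "i > 0" "j > 0" by auto
      then show ?case by (auto simp: pw_add[symmetric] intro!: exI[of _ "i+j"])
    qed
  qed
next
  show "{pw x k | k. k > 0} \<subseteq> gen {x}"
  proof clarify
    fix k :: nat assume "k > 0"
    then show "pw x k \<in> gen {x}"
    proof (induction k rule: nat_induct_non_zero)
      case 1 then show ?case by (simp add: gen_base)
    next
      case (Suc n) then show ?case by (simp add: pw_Suc gen.intros)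
    qed
  qed
qed

lemma gen_mono: assumes "X \<subseteq> Y" shows "gen X \<subseteq> gen Y"
proof
  fix a assume "a \<in> gen X"
  then show "a \<in> gen Y" by (induction rule: gen.induct) (use assms in \<open>auto intro: gen.intros\<close>)
qed

lemma pw_in_gen: assumes "x \<in> gen X" "k > 0" shows "pw x k \<in> gen X"
  using assms(2)
proof (induction k rule: nat_induct_non_zero)
  case 1 then show ?case using assms by simp
next
  case (Suc n) then show ?case using assms by (simp add: pw_Suc gen.intros)
qed



definition fin_pw :: "'a::semigroup_mult \<Rightarrow> bool" where
  "fin_pw x \<longleftrightarrow> (\<exists>r>0. \<exists>t>0. t \<noteq> r \<and> pw x r = pw x t)"

lemma idx_props: assumes "fin_pw x"
  shows "idx x > 0" "\<exists>t>0. t \<noteq> idx x \<and> pw x (idx x) = pw x t"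
proof -
  have "\<exists>r. r > 0 \<and> (\<exists>t>0. t \<noteq> r \<and> pw x r = pw x t)" using assms fin_pw_def by auto
  then have "idx x > 0 \<and> (\<exists>t>0. t \<noteq> idx x \<and> pw x (idx x) = pw x t)"
    unfolding idx_def by (rule LeastI_ex)
  then show "idx x > 0" "\<exists>t>0. t \<noteq> idx x \<and> pw x (idx x) = pw x t" by auto
qed

lemma idx_le: "r > 0 \<Longrightarrow> t > 0 \<Longrightarrow> t \<noteq> r \<Longrightarrow> pw x r = pw x t \<Longrightarrow> idx x \<le> r"
  unfolding idx_def by (rule Least_le) auto

lemma per_props: assumes "fin_pw x"
  shows "per x > 0" "pw x (idx x + per x) = pw x (idx x)"
proof -
  obtain t where t: "t > 0" "t \<noteq> idx x" "pw x (idx x) = pw x t" using idx_props[OF assms] by auto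
  have "idx x \<le> t" using idx_le[of t "idx x" x] t idx_props(1)[OF assms] by auto
  with t have "t > idx x" by auto
  then have "\<exists>k. k > 0 \<and> pw x (idx x + k) = pw x (idx x)"
    using t by (intro exI[of _ "t - idx x"]) auto
  then have "per x > 0 \<and> pw x (idx x + per x) = pw x (idx x)"
    unfolding per_def by (rule LeastI_ex)
  then show "per x > 0" "pw x (idx x + per x) = pw x (idx x)" by auto
qed

lemma per_le: "k > 0 \<Longrightarrow> pw x (idx x + k) = pw x (idx x) \<Longrightarrow> per x \<le> k"
  unfolding per_def by (rule Least_le) auto

lemma per_shift: assumes "fin_pw x" "k \<ge> idx x" shows "pw x (k + per x) = pw x k"
proof (cases "k = idx x")
  case True then show ?thesis using per_props[OF assms(1)] by simp
next
  case False
  then have d: "k = idx x + (k - idx x)" "k - idx x > 0" using assms by auto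
  have "k + per x = (idx x + per x) + (k - idx x)" using d by simp
  then have "pw x (k + per x) = pw x ((idx x + per x) + (k - idx x))" by (rule arg_cong[where f="pw x"])
  also have "\<dots> = pw x (idx x + per x) * pw x (k - idx x)"
    by (rule pw_add) (use d idx_props[OF assms(1)] in auto)
  also have "\<dots> = pw x (idx x) * pw x (k - idx x)" using per_props[OF assms(1)] by simp
  also have "\<dots> = pw x k" using d idx_props(1)[OF assms(1)] pw_add[of "idx x" "k - idx x" x] by simp
  finally show ?thesis .
qed

lemma per_shift_mult: assumes "fin_pw x" "k \<ge> idx x" shows "pw x (k + q * per x) = pw x k"
proof (induction q)
  case 0 then show ?case by simp
next
  case (Suc q)
  have "pw x (k + Suc q * per x) = pw x ((k + q * per x) + per x)" by (simp add: algebra_simps)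
  also have "\<dots> = pw x (k + q * per x)" using per_shift[OF assms(1)] assms(2) by simp
  finally show ?case using Suc by simp
qed

lemma pw_eq_imp: assumes "fin_pw x" "r > 0" "s > 0" "pw x r = pw x s" "r \<noteq> s"
  shows "r \<ge> idx x \<and> s \<ge> idx x \<and> r mod per x = s mod per x"
proof -
  have rI: "r \<ge> idx x" using idx_le[of r s x] assms by auto
  have sI: "s \<ge> idx x" using idx_le[of s r x] assms by auto
  define I P where "I = idx x" and "P = per x"
  have P0: "P > 0" using per_props[OF assms(1)] P_def by auto
  have I0: "I > 0" using idx_props[OF assms(1)] I_def by auto
  { fix r s assume rs: "r < s" "r \<ge> I" "pw x r = pw x s"
    define d where "d = s - r"
    define c where "c = I + (r * P - r)"
    have rP: "r \<le> r * P" using P0 by simp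
    have c0: "c > 0" unfolding c_def using I0 by simp
    have rc: "r + c = I + r * P" unfolding c_def using rP by arith
    have r0: "r > 0" using rs I0 by simp
    have "pw x (r + c) = pw x (s + c)"
      using rs(3) c0 r0 rs(1) pw_add[of r c x] pw_add[of s c x] by simp
    moreover have sc: "s + c = (I + d) + r * P" using rc d_def rs by arith
    ultimately have "pw x (I + r * P) = pw x ((I + d) + r * P)" using rc by metis
    then have e: "pw x I = pw x (I + d)" using per_shift_mult[OF assms(1), of I r] per_shift_mult[OF assms(1), of "I+d" r]
      I_def P_def by simp
    have "P dvd d"
    proof (rule ccontr)
      assume nd: "\<not> P dvd d"
      have "pw x (I + d mod P) = pw x (I + d)"
      proof -
        have "I + d = (I + d mod P) + (d div P) * P" by simp
        then show ?thesis using per_shift_mult[OF assms(1), of "I + d mod P" "d div P"] I_def P_def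
          by (metis le_add1)
      qed
      then have "pw x (I + d mod P) = pw x I" using e by simp
      then have "P \<le> d mod P" using per_le[of "d mod P" x] nd I_def P_def
        by (simp add: dvd_eq_mod_eq_0)
      then show False using P0 by (meson mod_less_divisor not_le)
    qed
    then have "r mod P = s mod P" unfolding d_def using rs mod_eq_dvd_iff_nat[of r s P] by simp
  } note key = this
  have "r mod P = s mod P"
  proof (cases "r < s")
    case True then show ?thesis using key[of r s] rI assms I_def by auto
  next
    case False then have "s < r" using assms by auto
    then show ?thesis using key[of s r] sI assms I_def by auto
  qed
  then show ?thesis using rI sI P_def by auto
qed

lemma pw_eq_iff: assumes "fin_pw x" "r > 0" "s > 0"
  shows "pw x r = pw x s \<longleftrightarrow> r = s \<or> (r \<ge> idx x \<and> s \<ge> idx x \<and> r mod per x = s mod per x)"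
proof
  assume "pw x r = pw x s" then show "r = s \<or> (r \<ge> idx x \<and> s \<ge> idx x \<and> r mod per x = s mod per x)"
    using pw_eq_imp[OF assms] by auto
next
  assume h: "r = s \<or> (r \<ge> idx x \<and> s \<ge> idx x \<and> r mod per x = s mod per x)"
  { fix r s assume rs: "r \<le> s" "r \<ge> idx x" "r mod per x = s mod per x"
    then have "per x dvd s - r" using mod_eq_dvd_iff_nat[of r s "per x"] by simp
    then obtain q where "s - r = per x * q" by (auto elim!: dvdE)
    then have "s - r = q * per x" by (simp add: mult.commute)
    then have "s = r + q * per x" using rs by simp
    then have "pw x r = pw x s" using per_shift_mult[OF assms(1) rs(2)] by simp }
  then show "pw x r = pw x s" using h
    by (cases "r \<le> s") (auto, metis nat_le_linear)
qed

lemma idem_pw_iff: assumes "fin_pw x" "k > 0"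
  shows "pw x k * pw x k = pw x k \<longleftrightarrow> k \<ge> idx x \<and> per x dvd k"
proof -
  have "pw x k * pw x k = pw x (k + k)" using pw_add[of k k x] assms by simp
  then have "pw x k * pw x k = pw x k \<longleftrightarrow> pw x (k + k) = pw x k" by simp
  also have "\<dots> \<longleftrightarrow> k \<ge> idx x \<and> (k + k) mod per x = k mod per x"
    using pw_eq_iff[OF assms(1), of "k+k" k] assms(2) by auto
  also have "(k + k) mod per x = k mod per x \<longleftrightarrow> per x dvd k"
    using mod_eq_dvd_iff_nat[of k "k+k" "per x"] by simp
  finally show ?thesis .
qed

lemma fin_pw_of_finite: assumes "finite F" "\<And>k. k > 0 \<Longrightarrow> pw x k \<in> F" shows "fin_pw x"
proof (rule ccontr)
  assume "\<not> fin_pw x"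
  then have "inj_on (pw x) {0<..}"
  proof (intro inj_onI)
    fix a b :: nat assume "\<not> fin_pw x" "a \<in> {0<..}" "b \<in> {0<..}" "pw x a = pw x b"
    then show "a = b" unfolding fin_pw_def by blast
  qed
  moreover have "pw x ` {0<..} \<subseteq> F" using assms by auto
  ultimately have "finite ({0<..} :: nat set)" using assms(1) finite_imageD finite_subset by metis
  then show False using infinite_Ioi[of "0::nat"] by simp
qed



lemma Prods_mset: "Prods L = {sprod xs | xs. xs \<noteq> [] \<and> mset xs \<subseteq># mset L}"
proof (intro equalityI subsetI)
  fix p assume "p \<in> Prods L"
  then obtain ixs where ixs: "p = sprod (map (\<lambda>i. L ! i) ixs)" "ixs \<noteq> []" "distinct ixs" "set ixs \<subseteq> {..<length L}"
    unfolding Prods_def by auto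
  have "mset ixs \<subseteq># mset [0..<length L]"
    using ixs(3,4) by (auto simp: mset_set_set[symmetric] subseteq_mset_def count_mset_set' atLeast0LessThan)
  then have "image_mset (\<lambda>i. L ! i) (mset ixs) \<subseteq># image_mset (\<lambda>i. L ! i) (mset [0..<length L])"
    by (rule image_mset_subseteq_mono)
  then have "mset (map (\<lambda>i. L ! i) ixs) \<subseteq># mset L"
    by (metis map_nth mset_map)
  then show "p \<in> {sprod xs | xs. xs \<noteq> [] \<and> mset xs \<subseteq># mset L}" using ixs by auto
next
  fix p assume "p \<in> {sprod xs | xs. xs \<noteq> [] \<and> mset xs \<subseteq># mset L}"
  then obtain xs where xs: "p = sprod xs" "xs \<noteq> []" "mset xs \<subseteq># mset L" by auto
  then obtain zs where zs: "mset (xs @ zs) = mset L" using mset_le_perm_append by blast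
  then obtain f where f: "bij_betw f {..<length (xs @ zs)} {..<length L}"
    "\<forall>i<length (xs @ zs). (xs @ zs) ! i = L ! (f i)"
    using permutation_Ex_bij by blast
  define ixs where "ixs = map f [0..<length xs]"
  have "inj_on f {..<length (xs @ zs)}" using f(1) unfolding bij_betw_def by simp
  then have "inj_on f {..<length xs}" by (rule inj_on_subset) auto
  then have "distinct ixs" unfolding ixs_def by (simp add: distinct_map atLeast_upt)
  moreover have "set ixs \<subseteq> {..<length L}" unfolding ixs_def using f(1) by (auto simp: bij_betw_def)
  moreover have "map (\<lambda>i. L ! i) ixs = xs" unfolding ixs_def
  proof (rule nth_equalityI)
    fix i assume "i < length (map (\<lambda>i. L ! i) (map f [0..<length xs]))"
    then have "i < length xs" by simp
    then show "map (\<lambda>i. L ! i) (map f [0..<length xs]) ! i = xs ! i"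
      using f(2)[rule_format, of i] by (simp add: nth_append)
  qed simp
  moreover have "ixs \<noteq> []" using xs(2) ixs_def by simp
  ultimately show "p \<in> Prods L" unfolding Prods_def using xs(1) by force
qed

definition PM :: "'a::semigroup_mult multiset \<Rightarrow> 'a set" where
  "PM M = {sprod xs | xs. xs \<noteq> [] \<and> mset xs \<subseteq># M}"

lemma Prods_PM: "Prods L = PM (mset L)"
  unfolding Prods_mset PM_def ..

lemma PM_empty[simp]: "PM {#} = {}"
  unfolding PM_def by auto

lemma PM_mono: assumes "M \<subseteq># M'" shows "PM M \<subseteq> PM M'"
proof
  fix p assume "p \<in> PM M"
  then obtain xs where "p = sprod xs" "xs \<noteq> []" "mset xs \<subseteq># M" unfolding PM_def by auto
  moreover have "mset xs \<subseteq># M'" using calculation(3) assms by (rule subset_mset.order_trans)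
  ultimately show "p \<in> PM M'" unfolding PM_def by auto
qed

lemma PM_single: "a \<in> PM (add_mset a M)"
  unfolding PM_def by (auto intro!: exI[of _ "[a]"])

lemma PM_snoc: assumes "p \<in> PM M" shows "p * a \<in> PM (add_mset a M)"
proof -
  obtain xs where xs: "p = sprod xs" "xs \<noteq> []" "mset xs \<subseteq># M" using assms unfolding PM_def by auto
  have "sprod (xs @ [a]) = p * a" using xs sprod_append[of xs "[a]"] by simp
  moreover have "mset (xs @ [a]) \<subseteq># add_mset a M" using xs(3) by simp
  ultimately show ?thesis unfolding PM_def using xs(2) by (intro CollectI exI[of _ "xs @ [a]"]) auto
qed

lemma sprod_gen: "xs \<noteq> [] \<Longrightarrow> set xs \<subseteq> X \<Longrightarrow> sprod xs \<in> gen X"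
proof (induction xs)
  case Nil then show ?case by simp
next
  case (Cons x xs)
  then show ?case by (cases "xs = []") (auto simp: sprod_Cons intro: gen.intros)
qed

lemma PM_gen: "PM M \<subseteq> gen (set_mset M)"
proof
  fix p assume "p \<in> PM M"
  then obtain xs where xs: "p = sprod xs" "xs \<noteq> []" "mset xs \<subseteq># M" unfolding PM_def by auto
  have "set xs \<subseteq> set_mset M" using set_mset_mono[OF xs(3)] by simp
  then show "p \<in> gen (set_mset M)" using sprod_gen xs by blast
qed

lemma sprod_replicate: "k > 0 \<Longrightarrow> sprod (replicate k x) = pw x k"
  by (simp add: pw_def)

lemma PM_replicate: "PM (replicate_mset v x) = pw x ` {1..v}"
proof (intro equalityI subsetI)
  fix p assume "p \<in> PM (replicate_mset v x)"
  then obtain xs where xs: "p = sprod xs" "xs \<noteq> []" "mset xs \<subseteq># replicate_mset v x"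
    unfolding PM_def by auto
  have "set xs \<subseteq> {x}"
  proof
    fix y assume "y \<in> set xs"
    then have "y \<in># replicate_mset v x" using xs(3) by (metis mset_subset_eqD set_mset_mset)
    then show "y \<in> {x}" by (simp split: if_splits)
  qed
  then have "\<forall>y\<in>set xs. y = x" by auto
  then have "xs = replicate (length xs) x" using replicate_length_same[of xs x] by simp
  moreover have "length xs \<le> v" using size_mset_mono[OF xs(3)] by simp
  moreover have "length xs > 0" using xs(2) by simp
  ultimately show "p \<in> pw x ` {1..v}" using xs(1) sprod_replicate[of "length xs" x]
    by (intro image_eqI[of _ _ "length xs"]) (auto simp: Suc_le_eq)
next
  fix p assume "p \<in> pw x ` {1..v}"
  then obtain k where k: "p = pw x k" "1 \<le> k" "k \<le> v" by auto
  have "mset (replicate k x) \<subseteq># replicate_mset v x" using k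
    by (simp add: subseteq_mset_def)
  then show "p \<in> PM (replicate_mset v x)" unfolding PM_def using k sprod_replicate[of k x]
    by (intro CollectI exI[of _ "replicate k x"]) auto
qed

lemma fin_pw_idem: assumes "fin_pw x" shows "pw x (idx x * per x) * pw x (idx x * per x) = pw x (idx x * per x)"
proof -
  have "idx x > 0" "per x > 0" using idx_props[OF assms] per_props[OF assms] by auto
  then show ?thesis using idem_pw_iff[OF assms, of "idx x * per x"] by simp
qed

context
  fixes M :: "'a::semigroup_mult multiset"
  assumes finN: "finite (UNIV - Idem :: 'a set)"
    and IF: "PM M \<inter> Idem = {}"
begin

lemma PM_sub_N: "V \<subseteq># M \<Longrightarrow> PM V \<subseteq> UNIV - Idem"
  using PM_mono IF by blast

lemma growth: assumes "add_mset a V \<subseteq># M" shows "PM V \<subset> PM (add_mset a V)"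
proof -
  have sub: "PM V \<subseteq> PM (add_mset a V)" by (rule PM_mono) simp
  show ?thesis
  proof (rule ccontr)
    assume "\<not> ?thesis"
    with sub have eq: "PM (add_mset a V) = PM V" by auto
    have pw_in: "pw a k \<in> PM V" if "k > 0" for k
      using that
    proof (induction k rule: nat_induct_non_zero)
      case 1 then show ?case using PM_single[of a V] eq by simp
    next
      case (Suc n)
      then show ?case using PM_snoc[of "pw a n" V a] eq pw_Suc'[of n a] by simp
    qed
    have "V \<subseteq># add_mset a V" by simp
    then have "V \<subseteq># M" using assms subset_mset.order_trans by blast
    then have fV: "finite (PM V)" using PM_sub_N[of V] finN finite_subset by blast
    have "fin_pw a" by (rule fin_pw_of_finite[OF fV pw_in])
    then have "pw a (idx a * per a) \<in> Idem" using fin_pw_idem unfolding Idem_def by auto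
    moreover have "pw a (idx a * per a) \<in> PM (add_mset a V)"
      using pw_in[of "idx a * per a"] eq idx_props(1)[OF \<open>fin_pw a\<close>] per_props(1)[OF \<open>fin_pw a\<close>] by simp
    moreover have "PM (add_mset a V) \<subseteq> UNIV - Idem" using PM_sub_N assms by blast
    ultimately show False by blast
  qed
qed

lemma growth_card: "W + D \<subseteq># M \<Longrightarrow> card (PM (W + D)) \<ge> card (PM W) + size D"
proof (induction D)
  case empty then show ?case by simp
next
  case (add a D)
  have "W + D \<subseteq># W + add_mset a D" by simp
  then have sub: "W + D \<subseteq># M" using add.prems subset_mset.order_trans by blast
  have ps: "PM (W + D) \<subset> PM (add_mset a (W + D))" using growth add.prems by simp
  have "finite (PM (add_mset a (W + D)))" using PM_sub_N[of "add_mset a (W + D)"] add.prems finN finite_subset by auto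
  then have "card (PM (W + D)) < card (PM (add_mset a (W + D)))" using ps psubset_card_mono by blast
  then show ?case using add.IH[OF sub] by simp
qed

lemma K_lemma: assumes "size M = card (UNIV - Idem :: 'a set)" "W \<subseteq># M"
  shows "card (PM W) = size W"
proof -
  have "card (PM W) \<ge> size W" using growth_card[of "{#}" W] assms(2) by simp
  moreover have "card (PM M) \<ge> card (PM W) + size (M - W)"
    using growth_card[of W "M - W"] assms(2) by (simp add: subset_mset.add_diff_inverse)
  moreover have "card (PM M) \<le> size M" using card_mono[OF finN PM_sub_N[of M]] assms(1) by simp
  moreover have "size (M - W) = size M - size W" using assms(2) by (simp add: size_Diff_submset)
  moreover have "size W \<le> size M" using assms(2) by (simp add: size_mset_mono)
  ultimately show ?thesis by linarith
qed

lemma PM_all: assumes "size M = card (UNIV - Idem :: 'a set)" shows "PM M = UNIV - Idem"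
proof -
  have "card (PM M) = card (UNIV - Idem :: 'a set)" using K_lemma[OF assms] assms by simp
  then show ?thesis using PM_sub_N[of M] finN by (simp add: card_subset_eq)
qed

end



lemma idem_iff: "y \<in> Idem \<longleftrightarrow> y * y = y" unfolding Idem_def by simp

lemma pw_reduce: assumes "fin_pw x" "k > 0" shows "\<exists>j\<in>{1..idx x + per x - 1}. pw x k = pw x j"
proof (cases "k \<le> idx x + per x - 1")
  case True then show ?thesis using assms by auto
next
  case False
  define I P where "I = idx x" and "P = per x"
  have P0: "P > 0" and I0: "I > 0" using per_props[OF assms(1)] idx_props[OF assms(1)] I_def P_def by auto
  define j where "j = I + (k - I) mod P"
  have kj: "k = j + ((k - I) div P) * P" unfolding j_def using False I_def P_def by simp
  have e1: "pw x k = pw x (j + ((k - I) div P) * P)" using kj by (rule arg_cong)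
  have e2: "pw x (j + ((k - I) div P) * P) = pw x j"
    using per_shift_mult[OF assms(1), of j "(k - I) div P"] j_def I_def P_def by simp
  have "pw x k = pw x j" using e1 e2 by simp
  moreover have "j \<in> {1..idx x + per x - 1}" unfolding j_def using I0 P0 I_def P_def
    using mod_less_divisor[OF P0, of "k - I"] by auto
  ultimately show ?thesis by auto
qed

lemma gen_single_fin: assumes "fin_pw x" shows "gen {x} = pw x ` {1..idx x + per x - 1}"
proof (intro equalityI subsetI)
  fix y assume "y \<in> gen {x}"
  then obtain k where "y = pw x k" "k > 0" unfolding gen_single by auto
  then show "y \<in> pw x ` {1..idx x + per x - 1}" using pw_reduce[OF assms, of k] by auto
next
  fix y assume "y \<in> pw x ` {1..idx x + per x - 1}"
  then show "y \<in> gen {x}" unfolding gen_single by auto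
qed

lemma finite_gen_single: assumes "fin_pw x" shows "finite (gen {x})"
  unfolding gen_single_fin[OF assms] by simp

lemma inj_pw: assumes "fin_pw x" shows "inj_on (pw x) {1..idx x + per x - 1}"
proof (rule inj_onI)
  fix r s assume rs: "r \<in> {1..idx x + per x - 1}" "s \<in> {1..idx x + per x - 1}" "pw x r = pw x s"
  show "r = s"
  proof (rule ccontr)
    assume "r \<noteq> s"
    then have h: "r \<ge> idx x" "s \<ge> idx x" "r mod per x = s mod per x" using pw_eq_imp[OF assms, of r s] rs by auto
    { fix r s assume "r < s" "r \<ge> idx x" "s \<le> idx x + per x - 1" "r mod per x = s mod per x"
      then have "per x dvd s - r" using mod_eq_dvd_iff_nat[of r s "per x"] by simp
      moreover have "s - r > 0" "s - r < per x" using \<open>r < s\<close> \<open>r \<ge> idx x\<close> \<open>s \<le> idx x + per x - 1\<close> by auto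
      ultimately have False using nat_dvd_not_less by blast }
    then show False using h rs \<open>r \<noteq> s\<close> by (cases "r < s") (auto, metis linorder_neqE_nat)
  qed
qed

lemma card_gen_single: assumes "fin_pw x" shows "card (gen {x}) = idx x + per x - 1"
  unfolding gen_single_fin[OF assms] using card_image[OF inj_pw[OF assms]] by simp

definition ipw :: "'a::semigroup_mult \<Rightarrow> 'a" where "ipw x = pw x (idx x * per x)"

lemma ipw_props: assumes "fin_pw x" shows "ipw x \<in> gen {x}" "ipw x \<in> Idem"
proof -
  have "idx x > 0" "per x > 0" using idx_props[OF assms] per_props[OF assms] by auto
  then show "ipw x \<in> gen {x}" unfolding ipw_def gen_single by auto
  show "ipw x \<in> Idem" unfolding ipw_def Idem_def using fin_pw_idem[OF assms] by simp
qed

lemma idem_in_gen: assumes "fin_pw x" "y \<in> gen {x}" "y \<in> Idem" shows "y = ipw x"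
proof -
  obtain k where k: "y = pw x k" "k > 0" using assms(2) unfolding gen_single by auto
  have I0: "idx x > 0" and P0: "per x > 0" using idx_props[OF assms(1)] per_props[OF assms(1)] by auto
  have "k \<ge> idx x" "per x dvd k" using idem_pw_iff[OF assms(1) k(2)] assms(3) k(1) unfolding Idem_def by auto
  moreover have "idx x * per x \<ge> idx x" using P0 by simp
  ultimately show ?thesis unfolding ipw_def k(1) using pw_eq_iff[OF assms(1) k(2), of "idx x * per x"] I0 P0
    by (simp add: dvd_eq_mod_eq_0)
qed

lemma fin_pw_gen: assumes "fin_pw x" "b \<in> gen {x}" shows "fin_pw b" "ipw b = ipw x" "gen {b} \<subseteq> gen {x}"
proof -
  have pb: "pw b k \<in> gen {x}" if "k > 0" for k using pw_in_gen[OF assms(2) that] .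
  show fb: "fin_pw b" by (rule fin_pw_of_finite[OF finite_gen_single[OF assms(1)] pb])
  show "gen {b} \<subseteq> gen {x}" unfolding gen_single[of b] using pb by auto
  then show "ipw b = ipw x" using idem_in_gen[OF assms(1)] ipw_props[OF fb] by auto
qed

lemma idem_props: assumes "x \<in> Idem" shows "fin_pw x" "idx x = 1" "per x = 1"
proof -
  have xx: "pw x 2 = pw x 1" using assms pw_add[of 1 1 x] unfolding Idem_def by (simp add: numeral_2_eq_2)
  then show f: "fin_pw x" unfolding fin_pw_def by (intro exI[of _ 1] exI[of _ 2]) auto
  have "idx x \<le> 1" using idx_le[of 1 2 x] xx by simp
  then show I: "idx x = 1" using idx_props[OF f] by simp
  have "per x \<le> 1" using per_le[of 1 x] xx I by (simp add: numeral_2_eq_2)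
  then show "per x = 1" using per_props[OF f] by simp
qed

lemma card_gen_nonidem: assumes "fin_pw x" shows "card (gen {x} - Idem) = idx x + per x - 2"
proof -
  have "gen {x} - Idem = gen {x} - {ipw x}"
  proof (intro equalityI subsetI)
    fix y assume "y \<in> gen {x} - Idem"
    then show "y \<in> gen {x} - {ipw x}" using ipw_props(2)[OF assms] by auto
  next
    fix y assume y: "y \<in> gen {x} - {ipw x}"
    then have "y \<notin> Idem" using idem_in_gen[OF assms, of y] by blast
    then show "y \<in> gen {x} - Idem" using y by blast
  qed
  moreover have "card (gen {x} - {ipw x}) = card (gen {x}) - 1"
    using ipw_props(1)[OF assms] finite_gen_single[OF assms] by (rule_tac card_Diff_singleton) auto
  ultimately show ?thesis using card_gen_single[OF assms] by simp
qed

lemma mult_range: fixes I P :: nat assumes "P > 0" shows "\<exists>k. I \<le> k \<and> k \<le> I + P - 1 \<and> P dvd k"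
proof -
  define k where "k = ((I + P - 1) div P) * P"
  have "k \<le> I + P - 1" unfolding k_def using div_mult_mod_eq[of "I+P-1" P] by linarith
  moreover have "I + P - 1 = k + (I + P - 1) mod P" unfolding k_def by simp
  then have "I + P - 1 < k + P" using mod_less_divisor[OF assms, of "I + P - 1"] by linarith
  then have "I \<le> k" using assms by simp
  ultimately show ?thesis unfolding k_def by auto
qed

lemma count_lemma:
  assumes f: "fin_pw x" and inj: "inj_on (pw x) {1..v}"
    and ni: "\<forall>k\<in>{1..v}. pw x k \<notin> Idem"
    and cov: "\<forall>k>0. pw x k \<notin> Idem \<longrightarrow> (\<exists>a\<in>{1..v}. pw x k = pw x a)"
  shows "v = idx x + per x - 2 \<and> idx x mod per x = 1 mod per x"
proof -
  define I P where "I = idx x" and "P = per x"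
  have P0: "P > 0" and I0: "I > 0" using per_props[OF f] idx_props[OF f] I_def P_def by auto
  define Q where "Q = I + P - 1"
  have idem: "pw x k \<in> Idem \<longleftrightarrow> k \<ge> I \<and> P dvd k" if "k > 0" for k
    using idem_pw_iff[OF f that] I_def P_def unfolding Idem_def by simp
  have injQ: "inj_on (pw x) {1..Q}" using inj_pw[OF f] Q_def I_def P_def by simp
  have vQ: "v \<le> Q"
  proof (rule ccontr)
    assume "\<not> v \<le> Q"
    then have "I \<in> {1..v}" "I + P \<in> {1..v}" using I0 Q_def by auto
    moreover have "pw x (I + P) = pw x I" using per_props[OF f] I_def P_def by simp
    ultimately have "I + P = I" using inj_onD[OF inj] by blast
    then show False using P0 by simp
  qed
  have le_v: "k \<le> v" if k1: "1 \<le> k" and kQ: "k \<le> Q" and kn: "pw x k \<notin> Idem" for k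
  proof -
    have "k > 0" using k1 by simp
    then obtain a where a: "a \<in> {1..v}" "pw x k = pw x a" using cov kn by blast
    then have "a = k" using injQ vQ k1 kQ by (auto dest: inj_onD)
    then show ?thesis using a by simp
  qed
  obtain m where m: "I \<le> m" "m \<le> Q" "P dvd m" using mult_range[OF P0, of I] Q_def by auto
  have mv: "v < m"
  proof (rule ccontr)
    assume "\<not> v < m"
    then have "m \<in> {1..v}" using m I0 by auto
    then show False using ni idem[of m] m I0 by auto
  qed
  have mQ: "m = Q"
  proof (rule ccontr)
    assume "m \<noteq> Q"
    then have "m + 1 \<le> Q" using m by simp
    moreover have "pw x (m + 1) \<notin> Idem"
    proof
      assume "pw x (m + 1) \<in> Idem"
      then have "P dvd m + 1" using idem[of "m+1"] by simp
      then have "P dvd (m + 1) - m" using m(3) by (simp only: dvd_diff_nat)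
      then have "P dvd 1" by simp
      then have "P = 1" by simp
      then show False using \<open>m + 1 \<le> Q\<close> m Q_def by simp
    qed
    ultimately have "m + 1 \<le> v" using le_v[of "m+1"] by simp
    then show False using mv by simp
  qed
  have v1: "v \<ge> Q - 1"
  proof (cases "Q - 1 \<ge> 1")
    case True
    have "pw x (Q - 1) \<notin> Idem"
    proof
      assume "pw x (Q - 1) \<in> Idem"
      then have "P dvd Q - 1" "Q - 1 \<ge> I" using idem[of "Q - 1"] True by auto
      then have "P dvd Q - (Q - 1)" using m(3) mQ by (simp add: dvd_diff_nat)
      then have "P dvd 1" using True by simp
      then have "P = 1" by simp
      then show False using \<open>Q - 1 \<ge> I\<close> Q_def I0 by simp
    qed
    then show ?thesis using le_v[of "Q - 1"] True by simp
  qed simp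
  have "v = I + P - 2" using v1 mv mQ Q_def by simp
  moreover have "P dvd (I - 1) + P" using m(3) mQ Q_def I0 by simp
  then have "P dvd I - 1" by simp
  then have "I mod P = 1 mod P" using mod_eq_dvd_iff_nat[of 1 I P] I0 by simp
  ultimately show ?thesis using I_def P_def by simp
qed

lemma nonidem_small: assumes f: "fin_pw x" "idx x mod per x = 1 mod per x" "1 \<le> k" "k \<le> idx x + per x - 2"
  shows "pw x k \<notin> Idem"
proof
  assume "pw x k \<in> Idem"
  then have h: "k \<ge> idx x" "per x dvd k" using idem_pw_iff[OF f(1), of k] f(3) unfolding Idem_def by auto
  have I0: "idx x > 0" using idx_props[OF f(1)] by simp
  have "per x dvd idx x - 1" using f(2) mod_eq_dvd_iff_nat[of 1 "idx x" "per x"] I0 by simp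
  then have "per x dvd k - (idx x - 1)" using h(2) by (simp add: dvd_diff_nat)
  moreover have "k - (idx x - 1) > 0" "k - (idx x - 1) < per x" using h f(4) I0 by auto
  ultimately show False using nat_dvd_not_less by blast
qed



lemma absorb_left: assumes "x * m = m" "c > 0" shows "x * pw m c = pw m c"
proof (cases "c = 1")
  case True then show ?thesis using assms by simp
next
  case False
  then obtain c' where "c = Suc c'" "c' > 0" using assms by (cases c) auto
  then show ?thesis using assms by (simp add: pw_Suc mult.assoc[symmetric])
qed

lemma sprod_min:
  assumes A: "\<forall>a\<in>A. \<forall>b\<in>A. a \<noteq> b \<longrightarrow> a * b = b * a \<and> (a * b = a \<or> a * b = b)"
  shows "xs \<noteq> [] \<Longrightarrow> set xs \<subseteq> A \<Longrightarrow>
    \<exists>m\<in>set xs. (\<forall>z\<in>set xs. z \<noteq> m \<longrightarrow> m * z = m) \<and> sprod xs = pw m (count_list xs m)"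
proof (induction xs)
  case Nil then show ?case by simp
next
  case (Cons x xs)
  show ?case
  proof (cases "xs = []")
    case True then show ?thesis by simp
  next
    case False
    then obtain m where m: "m \<in> set xs" "\<forall>z\<in>set xs. z \<noteq> m \<longrightarrow> m * z = m"
      "sprod xs = pw m (count_list xs m)" using Cons by auto
    have c0: "count_list xs m > 0" using m(1) count_list_0_iff[of xs m] by auto
    have sp: "sprod (x # xs) = x * pw m (count_list xs m)" using False m(3) by (simp add: sprod_Cons)
    have xA: "x \<in> A" and mA: "m \<in> A" using Cons.prems m(1) by auto
    show ?thesis
    proof (cases "x = m")
      case True
      then have "sprod (x # xs) = pw m (count_list (x # xs) m)" using sp c0 by (simp add: pw_Suc)
      then show ?thesis using m True by auto
    next
      case xm: False
      then have comm: "x * m = m * x" and cases: "x * m = x \<or> x * m = m" using A xA mA by auto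
      show ?thesis
      proof (cases "x * m = m")
        case True
        then have "sprod (x # xs) = pw m (count_list (x # xs) m)"
          using sp c0 absorb_left[OF True c0] xm by simp
        moreover have "\<forall>z\<in>set (x # xs). z \<noteq> m \<longrightarrow> m * z = m" using m(2) True comm by auto
        ultimately show ?thesis using m(1) by auto
      next
        case False
        then have xmx: "x * m = x" using cases by simp
        have xn: "x \<notin> set xs"
        proof
          assume "x \<in> set xs"
          then have "m * x = m" using m(2) xm by auto
          then show False using xmx comm xm by simp
        qed
        have "sprod (x # xs) = x" using sp absorb1[OF xmx c0] by simp
        moreover have "count_list (x # xs) x = 1" using xn by (simp add: count_list_0_iff)
        moreover have "\<forall>z\<in>set (x # xs). z \<noteq> x \<longrightarrow> x * z = x"
        proof
          fix z assume "z \<in> set (x # xs)"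
          show "z \<noteq> x \<longrightarrow> x * z = x"
          proof
            assume "z \<noteq> x"
            then have z: "z \<in> set xs" using \<open>z \<in> set (x # xs)\<close> by simp
            show "x * z = x"
            proof (cases "z = m")
              case True then show ?thesis using xmx by simp
            next
              case False
              then have "m * z = m" using m(2) z by simp
              have "x * z = (x * m) * z" using xmx by simp
              also have "\<dots> = x * (m * z)" by (simp add: mult.assoc)
              also have "\<dots> = x" using \<open>m * z = m\<close> xmx by simp
              finally show ?thesis .
            qed
          qed
        qed
        ultimately show ?thesis by auto
      qed
    qed
  qed
qed

lemma fin_pw_all: assumes "finite (UNIV - Idem :: 'a::semigroup_mult set)" shows "fin_pw (x::'a)"
proof (rule ccontr)
  assume nf: "\<not> fin_pw x"
  have "pw x k \<in> UNIV - Idem" if "k > 0" for k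
  proof -
    have "pw x (k + k) \<noteq> pw x k"
    proof
      assume "pw x (k + k) = pw x k"
      then have "fin_pw x" unfolding fin_pw_def using that
        by (intro exI[of _ "k + k"] conjI exI[of _ k]) auto
      then show False using nf by simp
    qed
    then show ?thesis using pw_add[of k k x] that unfolding Idem_def by auto
  qed
  then have "fin_pw x" using fin_pw_of_finite[OF assms] by blast
  with nf show False by simp
qed

lemma pw_closed: assumes "\<forall>a\<in>R. \<forall>b\<in>R. a * b \<in> R" "a \<in> R" "k > 0" shows "pw a k \<in> R"
  using assms(3)
proof (induction k rule: nat_induct_non_zero)
  case 1 then show ?case using assms by simp
next
  case (Suc n) then show ?case using assms by (simp add: pw_Suc)
qed

context
  fixes R :: "'a::semigroup_mult set"
  assumes finN: "finite (UNIV - Idem :: 'a set)"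
    and cl: "\<forall>a\<in>R. \<forall>b\<in>R. a * b \<in> R"
    and cm: "\<forall>a\<in>R. \<forall>b\<in>R. a * b = b * a"
begin

lemma ipw_pow: assumes "q > 0" "idx (a::'a) \<le> q" "per a dvd q" shows "pw a q = ipw a"
proof -
  have f: "fin_pw a" by (rule fin_pw_all[OF finN])
  have "pw a q \<in> Idem" using idem_pw_iff[OF f assms(1)] assms unfolding Idem_def by simp
  moreover have "pw a q \<in> gen {a}" unfolding gen_single using assms by auto
  ultimately show ?thesis using idem_in_gen[OF f] by simp
qed

lemma ipw_in: "a \<in> R \<Longrightarrow> ipw a \<in> R"
  unfolding ipw_def using pw_closed[OF cl] idx_props(1)[OF fin_pw_all[OF finN]] per_props(1)[OF fin_pw_all[OF finN]]
  by simp

lemma Nle_ipw: assumes "a \<in> R" "b \<in> R" "Nle R a b" shows "ipw b * ipw a = ipw a"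
proof -
  obtain c m where cm': "c \<in> R" "m > 0" "pw a m = b * c" using assms(3) unfolding Nle_def by auto
  have fa: "fin_pw a" and fb: "fin_pw b" using fin_pw_all[OF finN] by auto
  have Ia: "idx a > 0" and Pa: "per a > 0" and Ib: "idx b > 0" and Pb: "per b > 0"
    using idx_props(1) per_props(1) fa fb by auto
  define q where "q = idx a * per a * idx b * per b"
  have q0: "q > 0" unfolding q_def using Ia Pa Ib Pb by simp
  have "pw (pw a m) q = pw a (m * q)" using pw_mult cm'(2) q0 by blast
  moreover have "pw a (m * q) = ipw a"
  proof (rule ipw_pow)
    show "m * q > 0" using cm'(2) q0 by simp
    have "idx a \<le> q" unfolding q_def using Pa Ib Pb by (simp add: mult.assoc)
    moreover have "q \<le> m * q" using cm'(2) by simp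
    ultimately show "idx a \<le> m * q" by linarith
    show "per a dvd m * q" unfolding q_def by simp
  qed
  moreover have "pw (b * c) q = pw b q * pw c q" using pw_distrib cm cm'(1) assms(2) q0 by blast
  moreover have "pw b q = ipw b"
  proof (rule ipw_pow[OF q0])
    show "idx b \<le> q" unfolding q_def using Pa Ia Pb by (simp add: mult.commute mult.left_commute)
    show "per b dvd q" unfolding q_def by simp
  qed
  ultimately have e: "ipw a = ipw b * pw c q" using cm'(3) by simp
  have "ipw b * ipw b = ipw b" using ipw_props(2)[OF fb] unfolding Idem_def by simp
  then show ?thesis using e by (simp add: mult.assoc[symmetric])
qed

lemma Neq_ipw: assumes "a \<in> R" "b \<in> R" shows "Neq R a b \<longleftrightarrow> ipw a = ipw b"
proof
  assume "Neq R a b"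
  then have "ipw b * ipw a = ipw a" "ipw a * ipw b = ipw b"
    using Nle_ipw assms unfolding Neq_def by auto
  moreover have "ipw a * ipw b = ipw b * ipw a" using cm ipw_in assms by blast
  ultimately show "ipw a = ipw b" by simp
next
  assume e: "ipw a = ipw b"
  { fix a b assume ab: "a \<in> R" "b \<in> R" "ipw a = ipw b"
    have fa: "fin_pw a" and fb: "fin_pw b" using fin_pw_all[OF finN] by auto
    have Ia: "idx a > 0" and Pa: "per a > 0" and Ib: "idx b > 0" and Pb: "per b > 0"
      using idx_props(1) per_props(1) fa fb by auto
    have pa: "pw a (idx a * per a) = ipw b" using ab(3) unfolding ipw_def by simp
    have "Nle R a b"
    proof (cases "idx b * per b = 1")
      case True
      then have "b = ipw b" unfolding ipw_def by simp
      moreover have "b * b = b" using ipw_props(2)[OF fb] calculation unfolding Idem_def by simp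
      ultimately show ?thesis unfolding Nle_def using pa ab(2) Ia Pa
        by (intro bexI[of _ b] exI[of _ "idx a * per a"]) auto
    next
      case False
      have "idx b * per b > 0" using Ib Pb by simp
      then have K: "idx b * per b = Suc (idx b * per b - 1)" "idx b * per b - 1 > 0" using False by arith+
      have "b * pw b (idx b * per b - 1) = ipw b" unfolding ipw_def using K pw_Suc[OF K(2), of b] by simp
      moreover have "pw b (idx b * per b - 1) \<in> R" using pw_closed[OF cl ab(2) K(2)] .
      ultimately show ?thesis unfolding Nle_def using pa Ia Pa
        by (intro bexI[of _ "pw b (idx b * per b - 1)"] exI[of _ "idx a * per a"]) auto
    qed }
  then show "Neq R a b" unfolding Neq_def using e assms by auto
qed

end



context
  fixes T :: "'a::semigroup_mult list"
  assumes finN: "finite (UNIV - Idem :: 'a set)"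
    and lenT: "length T = card (UNIV - Idem :: 'a set)"
    and IFT: "Prods T \<inter> Idem = {}"
begin

lemma IFM: "PM (mset T) \<inter> Idem = {}" using IFT Prods_PM by metis

lemma sizeM: "size (mset T) = card (UNIV - Idem :: 'a set)" using lenT by simp

lemma K: "W \<subseteq># mset T \<Longrightarrow> card (PM W) = size W"
  using K_lemma[OF finN IFM sizeM] .

lemma PMall: "PM (mset T) = UNIV - Idem"
  using PM_all[OF finN IFM sizeM] .

lemma PMsub: "W \<subseteq># mset T \<Longrightarrow> PM W \<subseteq> UNIV - Idem"
  using PM_sub_N[OF finN IFM] .

lemma finPM: "W \<subseteq># mset T \<Longrightarrow> finite (PM W)"
  using PMsub finN finite_subset by blast

lemma supp_ni: assumes "x \<in> set T" shows "x \<notin> Idem"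
proof -
  have "{#x#} \<subseteq># mset T" using assms by simp
  moreover have "x \<in> PM {#x#}" using PM_single[of x "{#}"] by simp
  ultimately show ?thesis using PMsub by blast
qed

lemma pair: assumes "x \<in> set T" "y \<in> set T" "x \<noteq> y"
  shows "x * y = y * x \<and> (x * y = x \<or> x * y = y)"
proof -
  define W where "W = add_mset y {#x#}"
  have WM: "W \<subseteq># mset T" unfolding W_def using assms
    by (auto simp: subseteq_mset_def count_mset count_list_0_iff Suc_le_eq
        intro: Nat.gr0I)
  have cW: "card (PM W) = 2" using K[OF WM] unfolding W_def by simp
  have xin: "x \<in> PM W" unfolding W_def using PM_mono[of "{#x#}" "add_mset y {#x#}"] PM_single[of x "{#}"] by auto
  have yin: "y \<in> PM W" unfolding W_def using PM_single[of y "{#x#}"] by simp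
  have xy: "x * y \<in> PM W" unfolding W_def using PM_snoc[of x "{#x#}" y] PM_single[of x "{#}"] by simp
  have yx: "y * x \<in> PM W" unfolding W_def using PM_snoc[of y "{#y#}" x] PM_single[of y "{#}"]
    by (simp add: add_mset_commute)
  have "PM W = {x, y}"
  proof -
    have "{x, y} \<subseteq> PM W" using xin yin by auto
    moreover have "card {x, y} = card (PM W)" using cW assms(3) by simp
    ultimately show ?thesis using card_subset_eq[OF finPM[OF WM]] by metis
  qed
  then have h: "x * y \<in> {x, y}" "y * x \<in> {x, y}" using xy yx by auto
  have nx: "x * x \<noteq> x" and ny: "y * y \<noteq> y" using supp_ni assms unfolding Idem_def by auto
  show ?thesis
  proof (cases "x * y = x")
    case True
    show ?thesis
    proof (cases "y * x = y")
      case True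
      have "x * x = (x * y) * x" using \<open>x * y = x\<close> by simp
      also have "\<dots> = x * (y * x)" by (simp add: mult.assoc)
      finally have "x * x = x" using True \<open>x * y = x\<close> by simp
      with nx show ?thesis by simp
    next
      case False then show ?thesis using h \<open>x * y = x\<close> by auto
    qed
  next
    case False
    then have xyy: "x * y = y" using h by auto
    show ?thesis
    proof (cases "y * x = x")
      case True
      have "y * y = y * (x * y)" using xyy by simp
      also have "\<dots> = (y * x) * y" by (simp add: mult.assoc)
      finally have "y * y = y" using xyy True by simp
      with ny show ?thesis by simp
    next
      case False then show ?thesis using h xyy by auto
    qed
  qed
qed

lemma pairA: "\<forall>a\<in>set T. \<forall>b\<in>set T. a \<noteq> b \<longrightarrow> a * b = b * a \<and> (a * b = a \<or> a * b = b)"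
  using pair by blast

lemma finpw: "fin_pw (x::'a)" using fin_pw_all[OF finN] .

lemma core: assumes "x \<in> set T" "m \<in> set T" "x \<noteq> m" "k > 0" "c > 0" "pw x k = pw m c"
  shows "pw x k \<in> Idem"
proof -
  have f: "fin_pw x" by (rule finpw)
  have P0: "per x > 0" using per_props[OF f] by simp
  have pm: "x * m = m * x" "x * m = x \<or> x * m = m" using pair assms by auto
  show ?thesis
  proof (cases "x * m = x")
    case True
    have "x * pw x k = x" using absorb1[OF True assms(5)] assms(6) by simp
    then have "pw x (k + 1) = pw x 1" using pw_Suc[OF assms(4), of x] by simp
    then have "1 \<ge> idx x" "(k + 1) mod per x = 1 mod per x" using pw_eq_imp[OF f, of "k+1" 1] assms(4) by auto
    then have "per x dvd k" using mod_eq_dvd_iff_nat[of 1 "k+1" "per x"] by simp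
    moreover have "k \<ge> idx x" using \<open>1 \<ge> idx x\<close> assms(4) by simp
    ultimately show ?thesis using idem_pw_iff[OF f assms(4)] unfolding Idem_def by simp
  next
    case False
    then have "m * x = m" using pm by simp
    then have "pw m c * pw x 1 = pw m c" using absorb[of m x c 1] assms(5) by simp
    then have "pw x k * x = pw x k" using assms(6) by simp
    then have "pw x (k + 1) = pw x k" using pw_Suc'[OF assms(4), of x] by simp
    then have "k \<ge> idx x" "(k + 1) mod per x = k mod per x" using pw_eq_imp[OF f, of "k+1" k] assms(4) by auto
    then have "per x dvd 1" using mod_eq_dvd_iff_nat[of k "k+1" "per x"] by simp
    then have "per x dvd k" by simp
    then show ?thesis using \<open>k \<ge> idx x\<close> idem_pw_iff[OF f assms(4)] unfolding Idem_def by simp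
  qed
qed

lemma cover: assumes "x \<in> set T" "k > 0" "pw x k \<notin> Idem"
  shows "\<exists>a\<in>{1..count_list T x}. pw x k = pw x a"
proof -
  have "pw x k \<in> PM (mset T)" using PMall assms(3) by simp
  then obtain xs where xs: "pw x k = sprod xs" "xs \<noteq> []" "mset xs \<subseteq># mset T" unfolding PM_def by auto
  have st: "set xs \<subseteq> set T" using set_mset_mono[OF xs(3)] by simp
  obtain m where m: "m \<in> set xs" "sprod xs = pw m (count_list xs m)"
    using sprod_min[OF pairA xs(2) st] by auto
  have c0: "count_list xs m > 0" using m(1) count_list_0_iff[of xs m] by auto
  have cle: "count_list xs m \<le> count_list T m"
    using mset_subset_eq_count[OF xs(3), of m] by (simp add: count_mset)
  have "m = x"
  proof (rule ccontr)
    assume "m \<noteq> x"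
    then have "pw x k \<in> Idem" using core[OF assms(1) _ _ assms(2) c0] st m xs(1) by auto
    then show False using assms(3) by simp
  qed
  then show ?thesis using m xs(1) c0 cle by (intro bexI[of _ "count_list xs m"]) auto
qed

lemma counts: assumes "x \<in> set T"
  shows "count_list T x = idx x + per x - 2 \<and> idx x mod per x = 1 mod per x"
proof -
  define v where "v = count_list T x"
  have WM: "replicate_mset v x \<subseteq># mset T" unfolding v_def
    by (simp add: count_mset subseteq_mset_def)
  have "card (pw x ` {1..v}) = v" using K[OF WM] PM_replicate[of v x] by simp
  then have inj: "inj_on (pw x) {1..v}" by (simp add: eq_card_imp_inj_on)
  have ni: "\<forall>k\<in>{1..v}. pw x k \<notin> Idem" using PMsub[OF WM] PM_replicate[of v x] by auto
  have cov: "\<forall>k>0. pw x k \<notin> Idem \<longrightarrow> (\<exists>a\<in>{1..v}. pw x a = pw x k)"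
    using cover[OF assms] v_def by (metis)
  then have cov': "\<forall>k>0. pw x k \<notin> Idem \<longrightarrow> (\<exists>a\<in>{1..v}. pw x k = pw x a)" by metis
  show ?thesis using count_lemma[OF finpw inj ni cov'] v_def by simp
qed


abbreviation "RR \<equiv> gen (set T)"

lemma mult_cases: assumes "y \<in> set T" "z \<in> set T" "y \<noteq> z" "i > 0" "j > 0"
  shows "(y * z = y \<and> pw y i * pw z j = pw y i \<and> pw z j * pw y i = pw y i)
       \<or> (y * z = z \<and> pw y i * pw z j = pw z j \<and> pw z j * pw y i = pw z j)"
proof -
  have p: "y * z = z * y" "y * z = y \<or> y * z = z" using pair assms by auto
  have c: "pw y i * pw z j = pw z j * pw y i" using pw_comm[OF p(1) assms(4,5)] .
  show ?thesis
  proof (cases "y * z = y")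
    case True
    then show ?thesis using absorb[OF True assms(4,5)] c by simp
  next
    case False
    then have "z * y = z" using p by simp
    then show ?thesis using absorb[OF \<open>z * y = z\<close> assms(5,4)] c False p by simp
  qed
qed

lemma R_char: "RR = {pw y k | y k. y \<in> set T \<and> k > 0}"
proof (intro equalityI subsetI)
  fix a assume "a \<in> RR"
  then show "a \<in> {pw y k | y k. y \<in> set T \<and> k > 0}"
  proof (induction rule: gen.induct)
    case (gen_base x) then show ?case by (auto intro!: exI[of _ 1])
  next
    case (gen_mult a b)
    then obtain y i z j where yz: "a = pw y i" "b = pw z j" "y \<in> set T" "z \<in> set T" "i > 0" "j > 0" by auto
    show ?case
    proof (cases "y = z")
      case True
      then have "a * b = pw y (i + j)" using yz pw_add by metis
      then show ?thesis using yz by auto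
    next
      case False
      then show ?thesis using mult_cases[OF yz(3,4) False yz(5,6)] yz by auto
    qed
  qed
next
  fix a assume "a \<in> {pw y k | y k. y \<in> set T \<and> k > 0}"
  then obtain y k where "a = pw y k" "y \<in> set T" "k > 0" by auto
  then show "a \<in> RR" using pw_in_gen[of y "set T" k] gen_base by auto
qed

lemma R_elem: assumes "a \<in> RR" obtains y k where "a = pw y k" "y \<in> set T" "k > 0"
  using assms R_char by auto

lemma R_cl: "\<forall>a\<in>RR. \<forall>b\<in>RR. a * b \<in> RR" by (auto intro: gen_mult)

lemma R_comm: "\<forall>a\<in>RR. \<forall>b\<in>RR. a * b = b * a"
proof (intro ballI)
  fix a b assume "a \<in> RR" "b \<in> RR"
  then obtain y i z j where yz: "a = pw y i" "b = pw z j" "y \<in> set T" "z \<in> set T" "i > 0" "j > 0"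
    by (metis R_elem)
  show "a * b = b * a"
  proof (cases "y = z")
    case True
    then show ?thesis using yz pw_add[of i j y] pw_add[of j i y] by (simp add: add.commute)
  next
    case False
    then show ?thesis using mult_cases[OF yz(3,4) False yz(5,6)] yz by auto
  qed
qed

lemma R_sub: "RR \<subseteq> (\<Union>y\<in>set T. gen {y})"
proof
  fix a assume "a \<in> RR"
  then obtain y k where "a = pw y k" "y \<in> set T" "k > 0" by (metis R_elem)
  then have "a \<in> gen {y}" unfolding gen_single by auto
  then show "a \<in> (\<Union>y\<in>set T. gen {y})" using \<open>y \<in> set T\<close> by blast
qed

lemma R_fin: "finite RR"
  using R_sub finite_gen_single[OF finpw] by (meson finite_UN_I finite_set finite_subset)

lemma N_sub: "UNIV - RR \<subseteq> Idem"
  using PMall PM_gen[of "mset T"] by auto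

lemma Nle_same: assumes "y \<in> set T" "i > 0" "j > 0" shows "Nle RR (pw y i) (pw y j)"
proof -
  define m where "m = j + 1"
  have ij: "i * j \<ge> j" using assms by simp
  have "i * m = i + i * j" unfolding m_def by (simp add: algebra_simps)
  then have im: "i * m > j" using ij assms by linarith
  have "pw (pw y i) m = pw y (i * m)" using pw_mult[of i m y] assms m_def by simp
  also have "\<dots> = pw y j * pw y (i * m - j)" using pw_add[of j "i * m - j" y] im assms by simp
  finally have "pw (pw y i) m = pw y j * pw y (i * m - j)" .
  moreover have "y \<in> RR" using gen_base assms(1) by metis
  then have "pw y (i * m - j) \<in> RR" using pw_in_gen[of y "set T" "i * m - j"] im by simp
  ultimately show ?thesis unfolding Nle_def m_def by auto
qed

lemma Nle_abs: assumes "a \<in> RR" "b \<in> RR" "a * b = a" shows "Nle RR a b"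
proof -
  have "b * a = a" using R_comm assms by metis
  then show ?thesis unfolding Nle_def using assms by (intro bexI[of _ a] exI[of _ 1]) auto
qed

lemma R_chain: "Y_chain RR"
  unfolding Y_chain_def
proof (intro ballI)
  fix a b assume ab: "a \<in> RR" "b \<in> RR"
  then obtain y i z j where yz: "a = pw y i" "b = pw z j" "y \<in> set T" "z \<in> set T" "i > 0" "j > 0"
    by (metis R_elem)
  show "Nle RR a b \<or> Nle RR b a"
  proof (cases "y = z")
    case True then show ?thesis using Nle_same yz by auto
  next
    case False
    then show ?thesis using mult_cases[OF yz(3,4) False yz(5,6)] yz Nle_abs ab by auto
  qed
qed

lemma R_nless: "\<forall>x1\<in>RR. \<forall>x2\<in>RR. Nless RR x1 x2 \<longrightarrow> x1 * x2 = x1"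
proof (intro ballI impI)
  fix a b assume ab: "a \<in> RR" "b \<in> RR" and nl: "Nless RR a b"
  then obtain y i z j where yz: "a = pw y i" "b = pw z j" "y \<in> set T" "z \<in> set T" "i > 0" "j > 0"
    by (metis R_elem)
  show "a * b = a"
  proof (cases "y = z")
    case True then show ?thesis using Nle_same yz nl unfolding Nless_def by auto
  next
    case False
    then show ?thesis using mult_cases[OF yz(3,4) False yz(5,6)] yz Nle_abs ab nl unfolding Nless_def by auto
  qed
qed

lemma Neq_R: "a \<in> RR \<Longrightarrow> b \<in> RR \<Longrightarrow> Neq RR a b \<longleftrightarrow> ipw a = ipw b"
  using Neq_ipw[OF finN R_cl R_comm] .

lemma ipw_R: assumes "(a::'a) \<in> gen {y}" shows "ipw a = ipw y"
  using fin_pw_gen(2)[OF finpw assms] .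

lemma roles: assumes "z \<in> set T" "w \<in> set T" "z \<noteq> w" "ipw z = ipw w" "z * w = z"
  shows "z * ipw z = z" "w * ipw z = ipw z"
proof -
  have fz: "fin_pw z" and fw: "fin_pw w" by (rule finpw)+
  have K: "idx w * per w > 0" "idx z * per z > 0"
    using idx_props(1)[OF fw] per_props(1)[OF fw] idx_props(1)[OF fz] per_props(1)[OF fz] by auto
  show "z * ipw z = z" using absorb1[OF assms(5) K(1)] assms(4) unfolding ipw_def by simp
  have c: "z * w = w * z" using pair assms by auto
  have "pw z (idx z * per z) * w = w * pw z (idx z * per z)" using pw_comm1[OF c K(2)] .
  moreover have "pw z (idx z * per z) * pw w 1 = pw z (idx z * per z)" using absorb[OF assms(5) K(2), of 1] by simp
  ultimately show "w * ipw z = ipw z" unfolding ipw_def by simp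
qed

lemma not_both: assumes "z \<in> set T" "z * ipw z = z" "z * ipw z = ipw z" shows False
  using assms supp_ni ipw_props(2)[OF finpw] by metis

lemma gen_not_in: assumes "l \<in> set T" "h \<in> set T" "l \<noteq> h" shows "h \<notin> gen {l}"
proof
  assume "h \<in> gen {l}"
  then obtain k where k: "h = pw l k" "k > 0" unfolding gen_single by auto
  then have "pw l k \<in> Idem" using core[OF assms(1,2,3) k(2), of 1] by simp
  then show False using k supp_ni assms(2) by simp
qed


lemma gen_sub_R: "z \<in> set T \<Longrightarrow> gen {z} \<subseteq> RR"
  using gen_mono[of "{z}" "set T"] by auto

lemma lo_xor: assumes "p \<in> set T" "q \<in> set T" "p \<noteq> q" "ipw p = e" "ipw q = e"
  shows "(p * e = p) \<longleftrightarrow> \<not> (q * e = q)"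
proof -
  have pq: "p * q = q * p" "p * q = p \<or> p * q = q" using pair assms by auto
  show ?thesis
  proof (cases "p * q = p")
    case True
    have "p * ipw p = p" "q * ipw p = ipw p" using roles[OF assms(1,2,3) _ True] assms(4,5) by auto
    moreover have "\<not> (q * ipw q = q \<and> q * ipw q = ipw q)" using not_both[OF assms(2)] by blast
    ultimately show ?thesis using assms(4,5) by auto
  next
    case False
    then have qp: "q * p = q" using pq by simp
    have "q * ipw q = q" "p * ipw q = ipw q" using roles[OF assms(2,1) _ _ qp] assms(3,4,5) by auto
    moreover have "\<not> (p * ipw p = p \<and> p * ipw p = ipw p)" using not_both[OF assms(1)] by blast
    ultimately show ?thesis using assms(4,5) by auto
  qed
qed

lemma ext_lemma: assumes l: "l \<in> set T" and h: "h \<in> set T" and lh: "l \<noteq> h" "l * h = l"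
    and el: "ipw l = e" and eh: "ipw h = e" and C: "C = gen {l} \<union> gen {h}"
  shows "ideal_ext_cyclic C h l e" "h * e = e"
proof -
  have fl: "fin_pw l" by (rule finpw)
  have le: "l * e = l" and he: "h * e = e" using roles[OF l h lh(1) _ lh(2)] el eh by auto
  then show "h * e = e" by simp
  have CR: "C \<subseteq> RR" using C gen_sub_R l h by auto
  have ipwC: "\<forall>b\<in>C. ipw b = e" using C ipw_R el eh by auto
  have eG: "e \<in> gen {l}" using ipw_props(1)[OF fl] el by simp
  have Gcl: "\<forall>a\<in>gen {l}. \<forall>b\<in>gen {l}. a * b \<in> gen {l}" by (auto intro: gen_mult)
  have mixed: "a * b = a \<and> b * a = a" if ain: "a \<in> gen {l}" and bin: "b \<in> gen {h}" for a b
  proof -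
    obtain i where "a = pw l i" "i > 0" using ain unfolding gen_single by auto
    moreover obtain j where "b = pw h j" "j > 0" using bin unfolding gen_single by auto
    ultimately show ?thesis using mult_cases[OF l h lh(1), of i j] lh by auto
  qed
  have Ccl: "\<forall>a\<in>C. \<forall>b\<in>C. a * b \<in> C"
  proof (intro ballI)
    fix a b assume "a \<in> C" "b \<in> C"
    then show "a * b \<in> C" using C mixed by (auto intro: gen_mult)
  qed
  have ideal: "\<forall>b\<in>C. \<forall>g\<in>gen {l}. b * g \<in> gen {l} \<and> g * b \<in> gen {l}"
  proof (intro ballI)
    fix b g assume b: "b \<in> C" and g: "g \<in> gen {l}"
    show "b * g \<in> gen {l} \<and> g * b \<in> gen {l}"
    proof (cases "b \<in> gen {l}")
      case True then show ?thesis using g Gcl by blast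
    next
      case False
      then have "b \<in> gen {h}" using b C by blast
      then have "g * b = g \<and> b * g = g" using mixed g by blast
      then show ?thesis using g by simp
    qed
  qed
  have grp: "group_with_id (gen {l}) e"
    unfolding group_with_id_def
  proof (intro conjI ballI)
    show "e \<in> gen {l}" by (rule eG)
  next
    fix a b assume "a \<in> gen {l}" "b \<in> gen {l}" then show "a * b \<in> gen {l}" by (auto intro: gen_mult)
  next
    fix g assume g: "g \<in> gen {l}"
    then obtain i where i: "g = pw l i" "i > 0" unfolding gen_single by auto
    have ge: "g * e = g" using absorb[OF le i(2), of 1] i(1) by simp
    moreover have "e * g = g * e" using R_comm CR C g eG by blast
    ultimately show "e * g = g" "g * e = g" by auto
  next
    fix g assume g: "g \<in> gen {l}"
    then obtain i where i: "g = pw l i" "i > 0" unfolding gen_single by auto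
    have I0: "idx l > 0" and P0: "per l > 0" using idx_props(1)[OF fl] per_props(1)[OF fl] by auto
    define q where "q = per l * (i + idx l)"
    have qi: "q \<ge> i + idx l" unfolding q_def using P0 by simp
    define j where "j = q - i"
    have j0: "j > 0" and ij: "i + j = q" unfolding j_def using qi I0 by auto
    have q0: "q > 0" using qi I0 by simp
    have qI: "idx l \<le> q" using qi by simp
    have qd: "per l dvd q" unfolding q_def by simp
    have "pw l q = ipw l" using ipw_pow[OF finN R_cl R_comm q0 qI qd] .
    then have pq: "pw l (i + j) = e" using ij el by simp
    have h1: "g * pw l j = e" using pw_add[OF i(2) j0, of l] pq i(1) by simp
    have h2: "pw l j * g = e" using pw_add[OF j0 i(2), of l] pq i(1) by (simp add: add.commute)
    show "\<exists>h'\<in>gen {l}. g * h' = e \<and> h' * g = e"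
      using h1 h2 j0 unfolding gen_single by blast
  qed
  have card2: "card (gen {l}) \<ge> 2"
  proof -
    have "l \<noteq> e" using supp_ni[OF l] ipw_props(2)[OF fl] el by auto
    moreover have "{l, e} \<subseteq> gen {l}" using eG gen_base by auto
    then have "card {l, e} \<le> card (gen {l})" using card_mono[OF finite_gen_single[OF fl]] by blast
    ultimately show ?thesis by simp
  qed
  have hC: "h \<in> C - gen {l}" using C gen_not_in[OF l h lh(1)] gen_base by auto
  have CG: "C - gen {l} \<subseteq> gen {h}" using C by auto
  have pwG: "\<forall>b\<in>C. \<exists>n>0. pw b n \<in> gen {l}"
  proof
    fix b assume "b \<in> C"
    have fb: "fin_pw b" by (rule finpw)
    have "pw b (idx b * per b) = e" using ipwC \<open>b \<in> C\<close> unfolding ipw_def by simp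
    moreover have "idx b * per b > 0" using idx_props(1)[OF fb] per_props(1)[OF fb] by simp
    ultimately show "\<exists>n>0. pw b n \<in> gen {l}" using eG by (intro exI[of _ "idx b * per b"]) simp
  qed
  have finC: "finite C" using CR R_fin finite_subset by blast
  have GC: "gen {l} \<subseteq> C" using C by blast
  show "ideal_ext_cyclic C h l e"
    unfolding ideal_ext_cyclic_def Let_def
    by (intro conjI finC Ccl GC ideal grp card2 hC CG pwG)
qed


lemma comps: "\<forall>C\<in>arch_comps RR.
          (\<exists>x\<in>set T. C = gen {x} \<and> idx x mod per x = 1 mod per x)
        \<or> (\<exists>x1\<in>set T. \<exists>x2\<in>set T. \<exists>e.
              ideal_ext_cyclic C x1 x2 e \<and> x1 * e = e)"
proof
  fix C assume "C \<in> arch_comps RR"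
  then obtain a where a: "a \<in> RR" "C = {b \<in> RR. Neq RR a b}" unfolding arch_comps_def by blast
  obtain y k where yk: "a = pw y k" "y \<in> set T" "k > 0" using a(1) by (metis R_elem)
  define e where "e = ipw y"
  have "a \<in> gen {y}" using yk unfolding gen_single by auto
  then have ae: "ipw a = e" using ipw_R e_def by simp
  have Cun: "b \<in> C \<longleftrightarrow> (\<exists>z\<in>set T. ipw z = e \<and> b \<in> gen {z})" for b
  proof
    assume "b \<in> C"
    then have bR: "b \<in> RR" "Neq RR a b" using a by auto
    then have b: "b \<in> RR" "ipw b = e" using Neq_R[OF a(1) bR(1)] ae by auto
    then obtain z j where "b = pw z j" "z \<in> set T" "j > 0" by (metis R_elem)
    then have "b \<in> gen {z}" unfolding gen_single by auto
    then show "\<exists>z\<in>set T. ipw z = e \<and> b \<in> gen {z}" using ipw_R b(2) \<open>z \<in> set T\<close> by metis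
  next
    assume "\<exists>z\<in>set T. ipw z = e \<and> b \<in> gen {z}"
    then obtain z where z: "z \<in> set T" "ipw z = e" "b \<in> gen {z}" by auto
    then have bR: "b \<in> RR" "ipw b = e" using gen_sub_R[of z] ipw_R[of b z] by auto
    then have "Neq RR a b" using Neq_R[OF a(1) bR(1)] ae by simp
    then show "b \<in> C" using a bR by simp
  qed
  show "(\<exists>x\<in>set T. C = gen {x} \<and> idx x mod per x = 1 mod per x)
        \<or> (\<exists>x1\<in>set T. \<exists>x2\<in>set T. \<exists>e.
              ideal_ext_cyclic C x1 x2 e \<and> x1 * e = e)"
  proof (cases "\<forall>z\<in>set T. ipw z = e \<longrightarrow> z = y")
    case True
    have "C = gen {y}"
    proof (intro equalityI subsetI)
      fix b assume "b \<in> C"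
      then obtain z where "z \<in> set T" "ipw z = e" "b \<in> gen {z}" using Cun by blast
      then show "b \<in> gen {y}" using True by metis
    next
      fix b assume "b \<in> gen {y}" then show "b \<in> C" using Cun[of b] yk(2) e_def by blast
    qed
    moreover have "idx y mod per y = 1 mod per y" using counts[OF yk(2)] by simp
    ultimately show ?thesis using yk(2) by blast
  next
    case False
    then obtain u where u: "u \<in> set T" "ipw u = e" "u \<noteq> y" by auto
    have ye: "ipw y = e" using e_def by simp
    have only2: "z = y \<or> z = u" if z: "z \<in> set T" "ipw z = e" for z
    proof (rule ccontr)
      assume "\<not> (z = y \<or> z = u)"
      then have "z \<noteq> y" "z \<noteq> u" by auto
      then have X2: "(y * e = y) \<longleftrightarrow> \<not> (z * e = z)" and X3: "(u * e = u) \<longleftrightarrow> \<not> (z * e = z)"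
        using lo_xor[OF yk(2) z(1) _ ye z(2)] lo_xor[OF u(1) z(1) _ u(2) z(2)] by auto
      have X1: "(y * e = y) \<longleftrightarrow> \<not> (u * e = u)" using lo_xor[OF yk(2) u(1) u(3)[symmetric] ye u(2)] .
      from X1 X2 X3 show False by argo
    qed
    obtain l h where lh: "l \<in> set T" "h \<in> set T" "l \<noteq> h" "l * h = l" "ipw l = e" "ipw h = e"
      "{l, h} = {y, u}"
    proof (cases "y * u = y")
      case True then show ?thesis using that[of y u] yk(2) u ye by auto
    next
      case False
      then have "u * y = u" using pair[OF yk(2) u(1)] u(3) by auto
      then show ?thesis using that[of u y] yk(2) u ye by auto
    qed
    have "C = gen {l} \<union> gen {h}"
    proof (intro equalityI subsetI)
      fix b assume "b \<in> C"
      then obtain z where z: "z \<in> set T" "ipw z = e" "b \<in> gen {z}" using Cun by blast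
      then have "z \<in> {y, u}" using only2 by simp
      then have "z \<in> {l, h}" using lh(7) by simp
      then have "z = l \<or> z = h" by simp
      then show "b \<in> gen {l} \<union> gen {h}" using z(3) by blast
    next
      fix b assume "b \<in> gen {l} \<union> gen {h}"
      then show "b \<in> C"
      proof
        assume "b \<in> gen {l}" then show "b \<in> C" using Cun[of b] lh(1,5) by blast
      next
        assume "b \<in> gen {h}" then show "b \<in> C" using Cun[of b] lh(2,6) by blast
      qed
    qed
    then have "ideal_ext_cyclic C h l e" "h * e = e" using ext_lemma[OF lh(1,2,3,4,5,6)] by simp_all
    then show ?thesis using lh(1,2) by blast
  qed
qed

lemma forward: "let R = gen (set T) in
       finite R \<and> (\<forall>a\<in>R. \<forall>b\<in>R. a * b = b * a)
     \<and> UNIV - R \<subseteq> Idem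
     \<and> Y_chain R
     \<and> (\<forall>x1\<in>R. \<forall>x2\<in>R. Nless R x1 x2 \<longrightarrow> x1 * x2 = x1)
     \<and> (\<forall>C\<in>arch_comps R.
          (\<exists>x\<in>set T. C = gen {x} \<and> idx x mod per x = 1 mod per x)
        \<or> (\<exists>x1\<in>set T. \<exists>x2\<in>set T. \<exists>e.
              ideal_ext_cyclic C x1 x2 e \<and> x1 * e = e))
     \<and> (\<forall>x\<in>set T. count_list T x = idx x + per x - 2)"
proof -
  have c: "\<forall>x\<in>set T. count_list T x = idx x + per x - 2" using counts by blast
  show ?thesis unfolding Let_def by (intro conjI R_fin R_comm N_sub R_chain R_nless comps c)
qed

end



lemma sum_card_disjoint:
  assumes S: "finite S" and fin: "\<forall>i\<in>S. finite (A i)"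
    and eq: "card (\<Union>i\<in>S. A i) = (\<Sum>i\<in>S. card (A i))"
    and ij: "i \<in> S" "j \<in> S" "i \<noteq> j"
  shows "A i \<inter> A j = {}"
proof -
  define S' where "S' = S - {i} - {j}"
  have fS': "finite S'" using S S'_def by simp
  have U: "(\<Union>k\<in>S. A k) = (A i \<union> A j) \<union> (\<Union>k\<in>S'. A k)" using ij S'_def by auto
  have "(\<Sum>k\<in>S. card (A k)) = card (A i) + (\<Sum>k\<in>S - {i}. card (A k))" using S ij by (simp add: sum.remove)
  also have "(\<Sum>k\<in>S - {i}. card (A k)) = card (A j) + (\<Sum>k\<in>S'. card (A k))"
    using S ij S'_def sum.remove[of "S - {i}" j "\<lambda>k. card (A k)"] by simp
  finally have sumeq: "(\<Sum>k\<in>S. card (A k)) = card (A i) + card (A j) + (\<Sum>k\<in>S'. card (A k))" by simp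
  have "card (\<Union>k\<in>S. A k) \<le> card (A i \<union> A j) + card (\<Union>k\<in>S'. A k)" using U card_Un_le by metis
  also have "card (\<Union>k\<in>S'. A k) \<le> (\<Sum>k\<in>S'. card (A k))" using card_UN_le[OF fS'] by blast
  finally have "card (A i) + card (A j) \<le> card (A i \<union> A j)" using eq sumeq by simp
  moreover have "card (A i) + card (A j) = card (A i \<union> A j) + card (A i \<inter> A j)"
    using card_Un_Int fin ij by blast
  ultimately have "card (A i \<inter> A j) = 0" by simp
  then show ?thesis using fin ij by simp
qed

context
  fixes T :: "'a::semigroup_mult list"
  assumes finN: "finite (UNIV - Idem :: 'a set)"
    and lenT: "length T = card (UNIV - Idem :: 'a set)"
    and comR: "\<forall>a\<in>gen (set T). \<forall>b\<in>gen (set T). a * b = b * a"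
    and NR: "UNIV - gen (set T) \<subseteq> Idem"
    and ch: "Y_chain (gen (set T))"
    and nl: "\<forall>x1\<in>gen (set T). \<forall>x2\<in>gen (set T). Nless (gen (set T)) x1 x2 \<longrightarrow> x1 * x2 = x1"
    and cp: "\<forall>C\<in>arch_comps (gen (set T)).
          (\<exists>x\<in>set T. C = gen {x} \<and> idx x mod per x = 1 mod per x)
        \<or> (\<exists>x1\<in>set T. \<exists>x2\<in>set T. \<exists>e.
              ideal_ext_cyclic C x1 x2 e \<and> x1 * e = e)"
    and cnt: "\<forall>x\<in>set T. count_list T x = idx x + per x - 2"
begin

abbreviation "R \<equiv> gen (set T)"

lemma fp: "fin_pw (x::'a)" using fin_pw_all[OF finN] .

lemma suppR: "x \<in> set T \<Longrightarrow> x \<in> R" by (rule gen_base)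

lemma gensubR: "x \<in> set T \<Longrightarrow> gen {x} \<subseteq> R" using gen_mono[of "{x}" "set T"] by auto

lemma supp_ni2: assumes "y \<in> set T" shows "y \<notin> Idem"
proof
  assume "y \<in> Idem"
  then have "idx y = 1" "per y = 1" using idem_props by auto
  then have "count_list T y = 0" using cnt assms by simp
  then show False using assms count_list_0_iff by metis
qed

lemma own_comp: assumes "a \<in> R"
  shows "{b \<in> R. Neq R a b} \<in> arch_comps R" "a \<in> {b \<in> R. Neq R a b}"
proof -
  show "{b \<in> R. Neq R a b} \<in> arch_comps R" unfolding arch_comps_def using assms by blast
  have "pw a 2 = a * a" using pw_add[of 1 1 a] by (simp add: numeral_2_eq_2)
  then have "Nle R a a" unfolding Nle_def using assms by (intro bexI[of _ a] exI[of _ 2]) auto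
  then show "a \<in> {b \<in> R. Neq R a b}" unfolding Neq_def using assms by simp
qed

lemma ext_sub: assumes "ideal_ext_cyclic C x1 x2 e" shows "C \<subseteq> gen {x2} \<union> gen {x1}"
  using assms unfolding ideal_ext_cyclic_def Let_def by blast

lemma in_some_gen: assumes "a \<in> R" shows "\<exists>x\<in>set T. a \<in> gen {x}"
proof -
  let ?C = "{b \<in> R. Neq R a b}"
  have C: "?C \<in> arch_comps R" "a \<in> ?C" using own_comp[OF assms] by auto
  have disj: "(\<exists>x\<in>set T. ?C = gen {x} \<and> idx x mod per x = 1 mod per x)
        \<or> (\<exists>x1\<in>set T. \<exists>x2\<in>set T. \<exists>e. ideal_ext_cyclic ?C x1 x2 e \<and> x1 * e = e)"
    using cp C(1) by blast
  from disj show ?thesis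
  proof
    assume "\<exists>x\<in>set T. ?C = gen {x} \<and> idx x mod per x = 1 mod per x"
    then show ?thesis using C(2) by auto
  next
    assume "\<exists>x1\<in>set T. \<exists>x2\<in>set T. \<exists>e. ideal_ext_cyclic ?C x1 x2 e \<and> x1 * e = e"
    then obtain x1 x2 e where "x1 \<in> set T" "x2 \<in> set T" "ideal_ext_cyclic ?C x1 x2 e" by auto
    then show ?thesis using ext_sub C(2) by blast
  qed
qed

definition AA :: "'a \<Rightarrow> 'a set" where "AA y = gen {y} - Idem"

lemma N_union: "(UNIV - Idem :: 'a set) = (\<Union>y\<in>set T. AA y)"
proof (intro equalityI subsetI)
  fix w :: 'a assume w: "w \<in> UNIV - Idem"
  then have "w \<in> R" using NR by auto
  then obtain x where "x \<in> set T" "w \<in> gen {x}" using in_some_gen by blast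
  then show "w \<in> (\<Union>y\<in>set T. AA y)" using w unfolding AA_def by auto
next
  fix w assume "w \<in> (\<Union>y\<in>set T. AA y)" then show "w \<in> UNIV - Idem" unfolding AA_def by auto
qed

lemma AA_disj: assumes "y \<in> set T" "z \<in> set T" "y \<noteq> z" shows "AA y \<inter> AA z = {}"
proof -
  have fin: "\<forall>i\<in>set T. finite (AA i)" unfolding AA_def using finite_gen_single[OF fp] by auto
  have cards: "card (AA i) = count_list T i" if "i \<in> set T" for i
    unfolding AA_def using card_gen_nonidem[OF fp] cnt that by simp
  have "(\<Sum>i\<in>set T. card (AA i)) = (\<Sum>i\<in>set T. count_list T i)" using cards by simp
  also have "\<dots> = length T" using sum_count_set[of T "set T"] by simp
  also have "\<dots> = card (\<Union>y\<in>set T. AA y)" using lenT N_union by simp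
  finally show ?thesis using sum_card_disjoint[of "set T" AA y z] fin assms by simp
qed

lemma not_in_other: assumes "y \<in> set T" "z \<in> set T" "y \<noteq> z" shows "y \<notin> gen {z}"
proof
  assume "y \<in> gen {z}"
  then have "y \<in> AA z" "y \<in> AA y" unfolding AA_def using supp_ni2[OF assms(1)] gen_base[of y "{y}"] by auto
  then show False using AA_disj[OF assms] by auto
qed

lemma comp_gens: assumes "y \<in> set T"
  obtains (one) x where "x \<in> set T" "{b \<in> R. Neq R y b} = gen {x}" "idx x mod per x = 1 mod per x" "y = x"
  | (two) x1 x2 e where "x1 \<in> set T" "x2 \<in> set T" "ideal_ext_cyclic {b \<in> R. Neq R y b} x1 x2 e" "x1 * e = e"
      "y = x1 \<or> y = x2"
proof -
  let ?C = "{b \<in> R. Neq R y b}"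
  have C: "?C \<in> arch_comps R" "y \<in> ?C" using own_comp suppR assms by auto
  have disj: "(\<exists>x\<in>set T. ?C = gen {x} \<and> idx x mod per x = 1 mod per x)
        \<or> (\<exists>x1\<in>set T. \<exists>x2\<in>set T. \<exists>e. ideal_ext_cyclic ?C x1 x2 e \<and> x1 * e = e)"
    using cp C(1) by blast
  from disj show ?thesis
  proof
    assume "\<exists>x\<in>set T. ?C = gen {x} \<and> idx x mod per x = 1 mod per x"
    then obtain x where x: "x \<in> set T" "?C = gen {x}" "idx x mod per x = 1 mod per x" by auto
    then have "y = x" using C(2) not_in_other assms by blast
    then show ?thesis using one x by blast
  next
    assume "\<exists>x1\<in>set T. \<exists>x2\<in>set T. \<exists>e. ideal_ext_cyclic ?C x1 x2 e \<and> x1 * e = e"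
    then obtain x1 x2 e where x: "x1 \<in> set T" "x2 \<in> set T" "ideal_ext_cyclic ?C x1 x2 e" "x1 * e = e" by auto
    have "y \<in> gen {x2} \<union> gen {x1}" using ext_sub[OF x(3)] C(2) by blast
    then have "y = x1 \<or> y = x2" using not_in_other assms x(1,2) by blast
    then show ?thesis using two x by blast
  qed
qed


lemma ext_facts: assumes "ideal_ext_cyclic C x1 x2 e"
  shows "group_with_id (gen {x2}) e" "\<forall>b\<in>C. \<exists>n>0. pw b n \<in> gen {x2}" "x1 \<in> C"
  using assms unfolding ideal_ext_cyclic_def Let_def by auto

lemma pair2: assumes "y \<in> set T" "z \<in> set T" "y \<noteq> z"
  shows "y * z = z * y \<and> (y * z = y \<or> y * z = z)"
proof -
  have c: "y * z = z * y" using comR suppR assms by blast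
  have yR: "y \<in> R" and zR: "z \<in> R" using suppR assms by auto
  show ?thesis
  proof (cases "Neq R y z")
    case True
    then have zC: "z \<in> {b \<in> R. Neq R y b}" using zR by simp
    from assms(1) show ?thesis
    proof (cases rule: comp_gens)
      case (one x)
      then have "z \<in> gen {y}" using zC by simp
      then show ?thesis using not_in_other[OF assms(2,1)] assms(3) by simp
    next
      case (two x1 x2 e)
      have "z \<in> gen {x2} \<union> gen {x1}" using ext_sub[OF two(3)] zC by blast
      then have zx: "z = x1 \<or> z = x2" using not_in_other[OF assms(2)] two(1,2) by blast
      have grp: "group_with_id (gen {x2}) e" using ext_facts[OF two(3)] by simp
      have "e * x2 = x2" using grp gen_base[of x2 "{x2}"] unfolding group_with_id_def by auto
      then have "x1 * x2 = x2" using two(4) by (metis mult.assoc)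
      moreover have "x2 * x1 = x1 * x2" using comR suppR two(1,2) by blast
      ultimately show ?thesis using c zx two(5) assms(3) by auto
    qed
  next
    case False
    then have "Nless R y z \<or> Nless R z y" using ch yR zR unfolding Y_chain_def Nless_def Neq_def by blast
    then show ?thesis using nl yR zR c by auto
  qed
qed

lemma idxcond: assumes "m \<in> set T" shows "idx m mod per m = 1 mod per m"
  using assms
proof (cases rule: comp_gens)
  case (one x) then show ?thesis by simp
next
  case (two x1 x2 e)
  have grp: "group_with_id (gen {x2}) e" and pwG: "\<forall>b\<in>{b \<in> R. Neq R m b}. \<exists>n>0. pw b n \<in> gen {x2}"
    and x1C: "x1 \<in> {b \<in> R. Neq R m b}" using ext_facts[OF two(3)] by auto
  have eG: "e \<in> gen {x2}" and gid: "\<forall>g\<in>gen {x2}. e * g = g \<and> g * e = g"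
    using grp unfolding group_with_id_def by auto
  show ?thesis
  proof (cases "m = x2")
    case True
    obtain k where k: "e = pw x2 k" "k > 0" using eG unfolding gen_single by auto
    have "x2 * e = x2" using gid gen_base[of x2 "{x2}"] by auto
    then have "pw x2 (Suc k) = pw x2 1" using pw_Suc[OF k(2), of x2] k(1) by simp
    then have "idx x2 \<le> 1" using idx_le[of 1 "Suc k" x2] k(2) by simp
    then have "idx x2 = 1" using idx_props(1)[OF fp] by (metis le_neq_implies_less less_one not_less0)
    then show ?thesis using True by simp
  next
    case False
    then have mx: "m = x1" using two(5) by simp
    obtain n where n: "n > 0" "pw x1 n \<in> gen {x2}" using pwG x1C by blast
    have pe: "pw x1 j * e = e" if "j > 0" for j
      using that
    proof (induction j rule: nat_induct_non_zero)
      case 1 then show ?case using two(4) by simp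
    next
      case (Suc j)
      have "pw x1 (Suc j) * e = pw x1 j * (x1 * e)" using pw_Suc'[OF Suc(1), of x1] by (simp add: mult.assoc)
      then show ?case using Suc two(4) by simp
    qed
    have "pw x1 n = pw x1 n * e" using gid n(2) by auto
    then have pn: "pw x1 n = e" using pe[OF n(1)] by simp
    have eR: "e \<in> R" using gensubR[OF two(2)] eG by blast
    have x1R: "x1 \<in> R" using suppR two(1) by simp
    have "pw x1 (Suc n) = e * x1" using pw_Suc'[OF n(1), of x1] pn by simp
    also have "\<dots> = x1 * e" using comR eR x1R by blast
    finally have "pw x1 (Suc n) = pw x1 n" using two(4) pn by simp
    then have "Suc n mod per x1 = n mod per x1" using pw_eq_imp[OF fp, of "Suc n" n] n(1) by auto
    then have "per x1 dvd 1" using mod_eq_dvd_iff_nat[of n "Suc n" "per x1"] by simp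
    then show ?thesis using mx by simp
  qed
qed

lemma backward: "Prods T \<inter> Idem = {}"
proof -
  have "PM (mset T) \<inter> Idem = {}"
  proof (rule ccontr)
    assume "PM (mset T) \<inter> Idem \<noteq> {}"
    then obtain p where p: "p \<in> PM (mset T)" "p \<in> Idem" by auto
    then obtain xs where xs: "p = sprod xs" "xs \<noteq> []" "mset xs \<subseteq># mset T" unfolding PM_def by auto
    have st: "set xs \<subseteq> set T" using set_mset_mono[OF xs(3)] by simp
    have A: "\<forall>a\<in>set T. \<forall>b\<in>set T. a \<noteq> b \<longrightarrow> a * b = b * a \<and> (a * b = a \<or> a * b = b)"
      using pair2 by blast
    obtain m where m: "m \<in> set xs" "sprod xs = pw m (count_list xs m)"
      using sprod_min[OF A xs(2) st] by auto
    have mT: "m \<in> set T" using m st by auto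
    have c0: "count_list xs m \<ge> 1" using m(1) count_list_0_iff[of xs m] by (cases "count_list xs m") auto
    have cle: "count_list xs m \<le> count_list T m"
      using mset_subset_eq_count[OF xs(3), of m] by (simp add: count_mset)
    have "pw m (count_list xs m) \<notin> Idem"
      using nonidem_small[OF fp idxcond[OF mT] c0] cle cnt mT by simp
    then show False using p xs(1) m(2) by simp
  qed
  then show ?thesis using Prods_PM by metis
qed

end


theorem theorem3p2:
  fixes T :: "'a::semigroup_mult list"
  assumes "finite (UNIV - Idem :: 'a set)"
    and "length T = card (UNIV - Idem :: 'a set)"
  shows "Prods T \<inter> Idem = {} \<longleftrightarrow>
    (let R = gen (set T) in
       finite R \<and> (\<forall>a\<in>R. \<forall>b\<in>R. a * b = b * a)
     \<and> UNIV - R \<subseteq> Idem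
     \<and> Y_chain R
     \<and> (\<forall>x1\<in>R. \<forall>x2\<in>R. Nless R x1 x2 \<longrightarrow> x1 * x2 = x1)
     \<and> (\<forall>C\<in>arch_comps R.
          (\<exists>x\<in>set T. C = gen {x} \<and> idx x mod per x = 1 mod per x)
        \<or> (\<exists>x1\<in>set T. \<exists>x2\<in>set T. \<exists>e.
              ideal_ext_cyclic C x1 x2 e \<and> x1 * e = e))
     \<and> (\<forall>x\<in>set T. count_list T x = idx x + per x - 2))"
proof
  assume h: "Prods T \<inter> Idem = {}"
  show "let R = gen (set T) in
       finite R \<and> (\<forall>a\<in>R. \<forall>b\<in>R. a * b = b * a)
     \<and> UNIV - R \<subseteq> Idem
     \<and> Y_chain R
     \<and> (\<forall>x1\<in>R. \<forall>x2\<in>R. Nless R x1 x2 \<longrightarrow> x1 * x2 = x1)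
     \<and> (\<forall>C\<in>arch_comps R.
          (\<exists>x\<in>set T. C = gen {x} \<and> idx x mod per x = 1 mod per x)
        \<or> (\<exists>x1\<in>set T. \<exists>x2\<in>set T. \<exists>e.
              ideal_ext_cyclic C x1 x2 e \<and> x1 * e = e))
     \<and> (\<forall>x\<in>set T. count_list T x = idx x + per x - 2)"
    using forward[OF assms h] .
next
  assume h: "let R = gen (set T) in
       finite R \<and> (\<forall>a\<in>R. \<forall>b\<in>R. a * b = b * a)
     \<and> UNIV - R \<subseteq> Idem
     \<and> Y_chain R
     \<and> (\<forall>x1\<in>R. \<forall>x2\<in>R. Nless R x1 x2 \<longrightarrow> x1 * x2 = x1)
     \<and> (\<forall>C\<in>arch_comps R.
          (\<exists>x\<in>set T. C = gen {x} \<and> idx x mod per x = 1 mod per x)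
        \<or> (\<exists>x1\<in>set T. \<exists>x2\<in>set T. \<exists>e.
              ideal_ext_cyclic C x1 x2 e \<and> x1 * e = e))
     \<and> (\<forall>x\<in>set T. count_list T x = idx x + per x - 2)"
  then have h': "(\<forall>a\<in>gen (set T). \<forall>b\<in>gen (set T). a * b = b * a)"
     "UNIV - gen (set T) \<subseteq> Idem"
     "Y_chain (gen (set T))"
     "(\<forall>x1\<in>gen (set T). \<forall>x2\<in>gen (set T). Nless (gen (set T)) x1 x2 \<longrightarrow> x1 * x2 = x1)"
     "(\<forall>C\<in>arch_comps (gen (set T)).
          (\<exists>x\<in>set T. C = gen {x} \<and> idx x mod per x = 1 mod per x)
        \<or> (\<exists>x1\<in>set T. \<exists>x2\<in>set T. \<exists>e.
              ideal_ext_cyclic C x1 x2 e \<and> x1 * e = e))"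
     "(\<forall>x\<in>set T. count_list T x = idx x + per x - 2)"
    unfolding Let_def by auto
  show "Prods T \<inter> Idem = {}" using backward[OF assms h'] .
qed

end
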